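(* Let $E\in\mathbb C$ and let $z_1,\dots,z_{2m}$ be the eigenvalues of $T(E)$ (with algebraic multiplicity; all nonzero), with exponents $\xi_k=\frac1n\ln|z_k|$. Then for every real $\xi$, $$\frac1m\sum_{k:\ \xi_k<\xi}(\xi-\xi_k)\;-\;\xi=\frac{1}{mn}\int_0^{2\pi}\frac{d\varphi}{2\pi}\,\ln\Big|\det\big[H(e^{n\xi+i\varphi})-EI_{nm}\big]\Big|\;-\;\frac{1}{mn}\sum_{j=1}^n\ln|\det C_j|.$$
   Context: Fix integers $m\ge 1$, $n\ge 3$ and matrices $A_k,B_k,C_k\in\mathbb C^{m\times m}$, $k=1,\dots,n$, with all $B_k,C_k$ invertible. For $E\in\mathbb C$ the one-step transfer matrices are $t_k(E)=\begin{pmatrix} B_k^{-1}(E I_m-A_k) & -B_k^{-1}C_k\\ I_m & 0\end{pmatrix}\in\mathbb C^{2m\times 2m}$ and the transfer matrix is $T(E)=t_n(E)\cdots t_1(E)$. For $z\in\mathbb C\setminus\{0\}$, $H(z)\in\mathbb C^{nm\times nm}$ is the block matrix (blocks of size $m\times m$, indexed $1,\dots,n$) with diagonal blocks $H_{kk}=A_k$, superdiagonal blocks $H_{k,k+1}=B_k$ and subdiagonal blocks $H_{k+1,k}=C_{k+1}$ ($k=1,\dots,n-1$), corner blocks $H_{1,n}=z^{-1}C_1$ and $H_{n,1}=zB_n$, and all other blocks zero. *)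

theory Defs
  imports "HOL-Analysis.Analysis" "Jordan_Normal_Form.Gauss_Jordan_Elimination"
    "Jordan_Normal_Form.Char_Poly"
begin

text \<open>Block matrices over complex numbers; block indices run over 1..n,
  the block sequences A, B, C are functions nat => complex mat.\<close>

definition minv :: "complex mat \<Rightarrow> complex mat" where
  "minv X = the (mat_inverse X)"

definition tstep :: "nat \<Rightarrow> (nat \<Rightarrow> complex mat) \<Rightarrow> (nat \<Rightarrow> complex mat) \<Rightarrow> (nat \<Rightarrow> complex mat)
    \<Rightarrow> nat \<Rightarrow> complex \<Rightarrow> complex mat" where
  "tstep m A B C k E = four_block_mat
     (minv (B k) * (E \<cdot>\<^sub>m 1\<^sub>m m - A k)) (- (minv (B k) * C k))
     (1\<^sub>m m) (0\<^sub>m m m)"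

fun tprod :: "nat \<Rightarrow> (nat \<Rightarrow> complex mat) \<Rightarrow> (nat \<Rightarrow> complex mat) \<Rightarrow> (nat \<Rightarrow> complex mat)
    \<Rightarrow> nat \<Rightarrow> complex \<Rightarrow> complex mat" where
  "tprod m A B C 0 E = 1\<^sub>m (2 * m)"
| "tprod m A B C (Suc k) E = tstep m A B C (Suc k) E * tprod m A B C k E"

definition transfer :: "nat \<Rightarrow> nat \<Rightarrow> (nat \<Rightarrow> complex mat) \<Rightarrow> (nat \<Rightarrow> complex mat)
    \<Rightarrow> (nat \<Rightarrow> complex mat) \<Rightarrow> complex \<Rightarrow> complex mat" where
  "transfer m n A B C E = tprod m A B C n E"

definition Hblock :: "nat \<Rightarrow> (nat \<Rightarrow> complex mat) \<Rightarrow> (nat \<Rightarrow> complex mat) \<Rightarrow> (nat \<Rightarrow> complex mat)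
    \<Rightarrow> complex \<Rightarrow> nat \<Rightarrow> nat \<Rightarrow> complex mat" where
  "Hblock n A B C z k l =
     (if k = l then A k
      else if l = k + 1 then B k
      else if k = l + 1 then C k
      else if k = 1 \<and> l = n then inverse z \<cdot>\<^sub>m C 1
      else if k = n \<and> l = 1 then z \<cdot>\<^sub>m B n
      else 0\<^sub>m (dim_row (A 1)) (dim_row (A 1)))"

definition Hmat :: "nat \<Rightarrow> nat \<Rightarrow> (nat \<Rightarrow> complex mat) \<Rightarrow> (nat \<Rightarrow> complex mat) \<Rightarrow> (nat \<Rightarrow> complex mat)
    \<Rightarrow> complex \<Rightarrow> complex mat" where
  "Hmat m n A B C z = mat (n * m) (n * m)
     (\<lambda>(i, j). Hblock n A B C z (i div m + 1) (j div m + 1) $$ (i mod m, j mod m))"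

end

theory Submission
  imports Defs
begin


definition blk :: "nat \<Rightarrow> nat \<Rightarrow> (nat \<Rightarrow> nat \<Rightarrow> complex mat) \<Rightarrow> complex mat" where
  "blk N m X = mat (N*m) (N*m) (\<lambda>(i,j). X (i div m) (j div m) $$ (i mod m, j mod m))"

lemma blk_carrier[simp]: "blk N m X \<in> carrier_mat (N*m) (N*m)"
  by (simp add: blk_def)

lemma blk_dim[simp]: "dim_row (blk N m X) = N*m" "dim_col (blk N m X) = N*m"
  by (simp_all add: blk_def)

lemma blk_index: "i < N*m \<Longrightarrow> j < N*m \<Longrightarrow>
   blk N m X $$ (i,j) = X (i div m) (j div m) $$ (i mod m, j mod m)"
  by (simp add: blk_def)

lemma sum_blocks: fixes N m :: nat shows "(\<Sum>t<N*m. f t) = (\<Sum>b<N. \<Sum>c<m. f (b*m + c)::'a::comm_monoid_add)"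
proof (induct N)
  case 0 then show ?case by simp
next
  case (Suc N)
  have "{..<Suc N * m} = {..<N*m} \<union> {N*m..<N*m+m}" by auto
  then have "(\<Sum>t<Suc N*m. f t) = (\<Sum>t<N*m. f t) + (\<Sum>t\<in>{N*m..<N*m+m}. f t)"
    by (simp add: sum.union_disjoint ivl_disj_int(15) lessThan_atLeast0)
  also have "(\<Sum>t\<in>{N*m..<N*m+m}. f t) = (\<Sum>c<m. f (N*m + c))"
  proof -
    have "(\<Sum>t\<in>{N*m..<N*m+m}. f t) = (\<Sum>t\<in>{0+N*m..<m+N*m}. f t)" by (simp add: add.commute)
    also have "\<dots> = (\<Sum>c\<in>{0..<m}. f (c + N*m))" by (rule sum.shift_bounds_nat_ivl)
    finally show ?thesis by (simp add: add.commute atLeast0LessThan)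
  qed
  finally show ?case using Suc by simp
qed

lemma blk_mult_index:
  assumes X: "\<And>i b. i < N \<Longrightarrow> b < N \<Longrightarrow> X i b \<in> carrier_mat m m"
    and Y: "\<And>b j. b < N \<Longrightarrow> j < N \<Longrightarrow> Y b j \<in> carrier_mat m m"
    and ij: "i < N*m" "j < N*m"
  shows "(blk N m X * blk N m Y) $$ (i,j) =
     (\<Sum>b<N. (X (i div m) b * Y b (j div m)) $$ (i mod m, j mod m))"
proof -
  have m: "0 < m" using ij by (cases m) auto
  have idm: "i div m < N" "j div m < N" using ij by (auto simp: less_mult_imp_div_less)
  have "(blk N m X * blk N m Y) $$ (i,j) = (\<Sum>t<N*m. blk N m X $$ (i,t) * blk N m Y $$ (t,j))"
    using ij by (simp add: scalar_prod_def lessThan_atLeast0)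
  also have "\<dots> = (\<Sum>b<N. \<Sum>c<m. blk N m X $$ (i,b*m+c) * blk N m Y $$ (b*m+c,j))"
    by (rule sum_blocks)
  also have "\<dots> = (\<Sum>b<N. (X (i div m) b * Y b (j div m)) $$ (i mod m, j mod m))"
  proof (rule sum.cong[OF refl])
    fix b assume b: "b \<in> {..<N}"
    have lt: "c < m \<Longrightarrow> b*m + c < N*m" for c
    proof -
      assume c: "c < m"
      have "b*m + c < (b+1)*m" using c by simp
      also have "(b+1)*m \<le> N*m" using b by (intro mult_le_mono1) auto
      finally show ?thesis .
    qed
    show "(\<Sum>c<m. blk N m X $$ (i,b*m+c) * blk N m Y $$ (b*m+c,j)) =
          (X (i div m) b * Y b (j div m)) $$ (i mod m, j mod m)"
      using X[OF idm(1), of b] Y[of b "j div m"] b idm m ij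
      by (auto simp: blk_index lt scalar_prod_def lessThan_atLeast0 intro!: sum.cong)
  qed
  finally show ?thesis .
qed


lemma div_lt_N: "i < N * m \<Longrightarrow> i div m < (N::nat)"
  by (simp add: less_mult_imp_div_less)

lemma mod_lt_m: "i < N * m \<Longrightarrow> i mod m < (m::nat)"
  by (cases m) auto

lemma divmod_eq_imp: "i div m = j div m \<Longrightarrow> i mod m = j mod m \<Longrightarrow> i = (j::nat)"
  by (metis div_mult_mod_eq)

lemma prod_list_all1: "\<forall>x\<in>set xs. x = (1::'a::monoid_mult) \<Longrightarrow> prod_list xs = 1"
  by (induct xs) auto

lemma det_blk_colop:
  fixes X X' :: "nat \<Rightarrow> nat \<Rightarrow> complex mat"
  assumes X: "\<And>i j. i < N \<Longrightarrow> j < N \<Longrightarrow> X i j \<in> carrier_mat m m"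
    and Y: "\<And>p. p \<in> S \<Longrightarrow> Y p \<in> carrier_mat m m"
    and q: "q < N" and S: "S \<subseteq> {..<N}" and qS: "q \<notin> S"
    and tri: "(\<forall>p\<in>S. q < p) \<or> (\<forall>p\<in>S. p < q)"
    and Xn: "\<And>i j. i < N \<Longrightarrow> j < N \<Longrightarrow> j \<noteq> q \<Longrightarrow> X' i j = X i j"
    and Xq: "\<And>i r c. i < N \<Longrightarrow> r < m \<Longrightarrow> c < m \<Longrightarrow>
       X' i q $$ (r,c) = X i q $$ (r,c) + (\<Sum>p\<in>S. (X i p * Y p) $$ (r,c))"
  shows "det (blk N m X') = det (blk N m X)"
proof -
  define U where "U = (\<lambda>b j. if j = q \<and> b \<in> S then Y b else if b = j then 1\<^sub>m m else 0\<^sub>m m m)"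
  have U: "U b j \<in> carrier_mat m m" for b j using Y unfolding U_def by auto
  have finS: "finite S" using S finite_subset by blast
  have eq: "blk N m X' = blk N m X * blk N m U"
  proof (rule eq_matI)
    fix i j assume "i < dim_row (blk N m X * blk N m U)" "j < dim_col (blk N m X * blk N m U)"
    then have ij: "i < N*m" "j < N*m" by auto
    note dm = div_lt_N[OF ij(1)] div_lt_N[OF ij(2)] mod_lt_m[OF ij(1)] mod_lt_m[OF ij(2)]
    have Xc: "b < N \<Longrightarrow> X (i div m) b \<in> carrier_mat m m" for b using X dm by auto
    have rhs: "(blk N m X * blk N m U) $$ (i,j) =
      (\<Sum>b<N. (X (i div m) b * U b (j div m)) $$ (i mod m, j mod m))"
      by (rule blk_mult_index[OF X U ij])
    show "blk N m X' $$ (i,j) = (blk N m X * blk N m U) $$ (i,j)"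
    proof (cases "j div m = q")
      case False
      have "(\<Sum>b<N. (X (i div m) b * U b (j div m)) $$ (i mod m, j mod m)) =
            (\<Sum>b<N. if b = j div m then X (i div m) (j div m) $$ (i mod m, j mod m) else 0)"
        using False Xc dm by (intro sum.cong) (auto simp: U_def right_mult_one_mat[OF Xc] right_mult_zero_mat[OF Xc])
      also have "\<dots> = X (i div m) (j div m) $$ (i mod m, j mod m)" using dm by simp
      finally show ?thesis using rhs False Xn dm ij by (simp add: blk_index)
    next
      case True
      have "(\<Sum>b<N. (X (i div m) b * U b (j div m)) $$ (i mod m, j mod m)) =
            (\<Sum>b<N. (if b \<in> S then (X (i div m) b * Y b) $$ (i mod m, j mod m) else 0)
                   + (if b = q then X (i div m) q $$ (i mod m, j mod m) else 0))"
        using True Xc dm qS by (intro sum.cong) (auto simp: U_def right_mult_one_mat[OF Xc] right_mult_zero_mat[OF Xc])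
      also have "\<dots> = (\<Sum>b\<in>S. (X (i div m) b * Y b) $$ (i mod m, j mod m))
                     + X (i div m) q $$ (i mod m, j mod m)"
        using S q by (simp add: sum.distrib sum.If_cases Int_absorb1 Int_absorb2 finS)
      finally show ?thesis using rhs True Xq dm ij by (simp add: blk_index)
    qed
  qed auto
  have "det (blk N m U) = 1"
    using tri
  proof
    assume lo: "\<forall>p\<in>S. q < p"
    have "det (blk N m U) = prod_list (diag_mat (blk N m U))"
    proof (rule det_lower_triangular[of "N*m"])
      fix i j assume ij: "i < j" "j < N*m"
      then have i: "i < N*m" by simp
      have "i div m \<le> j div m" using ij by (simp add: div_le_mono)
      then show "blk N m U $$ (i,j) = 0"
        using ij i lo mod_lt_m[OF i] mod_lt_m[OF ij(2)]
        by (auto simp: blk_index U_def dest: divmod_eq_imp)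
    qed auto
    also have "\<dots> = 1"
    proof -
      have "\<forall>x\<in>set (diag_mat (blk N m U)). x = 1"
        using qS mod_lt_m by (auto simp: diag_mat_def blk_index U_def)
      then show ?thesis by (rule prod_list_all1)
    qed
    finally show ?thesis .
  next
    assume up: "\<forall>p\<in>S. p < q"
    have "det (blk N m U) = prod_list (diag_mat (blk N m U))"
    proof (rule det_upper_triangular[of _ "N*m"])
      show "upper_triangular (blk N m U)"
        unfolding upper_triangular_def
      proof (intro allI impI)
        fix i j assume ij: "i < dim_row (blk N m U)" "j < i"
        then have i: "i < N*m" "j < N*m" by auto
        have "j div m \<le> i div m" using ij by (simp add: div_le_mono)
        then show "blk N m U $$ (i,j) = 0"
          using ij i up mod_lt_m[OF i(1)] mod_lt_m[OF i(2)]
          by (auto simp: blk_index U_def dest: divmod_eq_imp)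
      qed
    qed auto
    also have "\<dots> = 1"
    proof -
      have "\<forall>x\<in>set (diag_mat (blk N m U)). x = 1"
        using qS mod_lt_m by (auto simp: diag_mat_def blk_index U_def)
      then show ?thesis by (rule prod_list_all1)
    qed
    finally show ?thesis .
  qed
  then show ?thesis unfolding eq by (subst det_mult[of _ "N*m"]) auto
qed


lemma det_split_UR0:
  fixes M :: "complex mat"
  assumes M: "M \<in> carrier_mat (p+q) (p+q)"
    and z: "\<And>i j. i < p \<Longrightarrow> p \<le> j \<Longrightarrow> j < p+q \<Longrightarrow> M$$(i,j) = 0"
  shows "det M = det (mat p p (\<lambda>(i,j). M$$(i,j))) * det (mat q q (\<lambda>(i,j). M$$(i+p,j+p)))"
proof -
  obtain A1 A2 A3 A4 where sb: "split_block M p p = (A1,A2,A3,A4)" by (metis prod_cases4)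
  have dims: "dim_row M = p + q" "dim_col M = p + q" using M by auto
  note spl = split_block[OF sb dims]
  have A1: "A1 = mat p p (\<lambda>(i,j). M$$(i,j))" using sb unfolding split_block_def Let_def
    by (auto intro!: eq_matI)
  have A4: "A4 = mat q q (\<lambda>(i,j). M$$(i+p,j+p))" using sb dims unfolding split_block_def Let_def
    by (auto intro!: eq_matI)
  have A2: "A2 = 0\<^sub>m p q" using sb dims z unfolding split_block_def Let_def
    by (auto intro!: eq_matI)
  show ?thesis
    apply (subst spl(5))
    apply (subst det_four_block_mat_upper_right_zero[OF spl(1) A2 spl(3) spl(4)])
    using A1 A4 by simp
qed

lemma det_split_LL0:
  fixes M :: "complex mat"
  assumes M: "M \<in> carrier_mat (p+q) (p+q)"
    and z: "\<And>i j. p \<le> i \<Longrightarrow> i < p+q \<Longrightarrow> j < p \<Longrightarrow> M$$(i,j) = 0"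
  shows "det M = det (mat p p (\<lambda>(i,j). M$$(i,j))) * det (mat q q (\<lambda>(i,j). M$$(i+p,j+p)))"
proof -
  obtain A1 A2 A3 A4 where sb: "split_block M p p = (A1,A2,A3,A4)" by (metis prod_cases4)
  have dims: "dim_row M = p + q" "dim_col M = p + q" using M by auto
  note spl = split_block[OF sb dims]
  have A1: "A1 = mat p p (\<lambda>(i,j). M$$(i,j))" using sb unfolding split_block_def Let_def
    by (auto intro!: eq_matI)
  have A4: "A4 = mat q q (\<lambda>(i,j). M$$(i+p,j+p))" using sb dims unfolding split_block_def Let_def
    by (auto intro!: eq_matI)
  have A3: "A3 = 0\<^sub>m q p" using sb dims z unfolding split_block_def Let_def
    by (auto intro!: eq_matI)
  show ?thesis
    apply (subst spl(5))
    apply (subst det_four_block_mat_lower_left_zero[OF spl(1) spl(2) A3 spl(4)])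
    using A1 A4 by simp
qed

lemma det_blk_lower:
  assumes X: "\<And>i j. i < N \<Longrightarrow> j < N \<Longrightarrow> X i j \<in> carrier_mat m m"
    and z: "\<And>i j. i < j \<Longrightarrow> j < N \<Longrightarrow> X i j = 0\<^sub>m m m"
  shows "det (blk N m X) = (\<Prod>i<N. det (X i i))"
  using X z
proof (induct N)
  case 0
  then show ?case by (simp add: blk_def)
next
  case (Suc N)
  have c: "blk (Suc N) m X \<in> carrier_mat (N*m + m) (N*m + m)" using blk_carrier[of "Suc N" m X] by (simp add: add.commute)
  have "det (blk (Suc N) m X) = det (mat (N*m) (N*m) (\<lambda>(i,j). blk (Suc N) m X $$ (i,j)))
      * det (mat m m (\<lambda>(i,j). blk (Suc N) m X $$ (i + N*m, j + N*m)))"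
  proof (rule det_split_UR0[OF c])
    fix i j assume ij: "i < N*m" "N*m \<le> j" "j < N*m + m"
    have "i div m < N" using ij by (simp add: less_mult_imp_div_less)
    moreover have "j div m = N" using ij by (simp add: div_nat_eqI mult.commute)
    ultimately show "blk (Suc N) m X $$ (i,j) = 0"
      using ij Suc.prems(2)[of "i div m" "j div m"] mod_lt_m[of i N m] mod_lt_m[of j "Suc N" m]
      by (simp add: blk_index)
  qed
  also have "mat (N*m) (N*m) (\<lambda>(i,j). blk (Suc N) m X $$ (i,j)) = blk N m X"
    by (rule eq_matI) (auto simp: blk_index blk_def)
  also have "mat m m (\<lambda>(i,j). blk (Suc N) m X $$ (i + N*m, j + N*m)) = X N N"
    using Suc.prems(1)[of N N] by (intro eq_matI) (auto simp: blk_index)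
  finally show ?case using Suc by simp
qed


lemma minv_props:
  assumes A: "A \<in> carrier_mat n n" and inv: "invertible_mat A"
  shows "A * minv A = 1\<^sub>m n \<and> minv A * A = 1\<^sub>m n \<and> minv A \<in> carrier_mat n n"
proof -
  obtain B where AB: "A * B = 1\<^sub>m (dim_row A)" "B * A = 1\<^sub>m (dim_row B)"
    using inv unfolding invertible_mat_def inverts_mat_def by blast
  have B: "B \<in> carrier_mat n n"
  proof -
    have "dim_col B = n" using arg_cong[of _ _ dim_col, OF AB(1)] A by simp
    moreover have "dim_row B = n" using arg_cong[of _ _ dim_col, OF AB(2)] A by simp
    ultimately show ?thesis by auto
  qed
  have U: "A \<in> Units (ring_mat TYPE(complex) n undefined)"
  proof -
    have "B * A = 1\<^sub>m n" "A * B = 1\<^sub>m n" using AB A B by auto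
    then show ?thesis unfolding Units_def ring_mat_def using A B by (simp add: bexI[of _ B])
  qed
  obtain B' where "mat_inverse A = Some B'"
    using mat_inverse(1)[OF A, of undefined] U by (cases "mat_inverse A") auto
  then show ?thesis unfolding minv_def using mat_inverse(2)[OF A] by auto
qed

fun seqF :: "nat \<Rightarrow> (nat \<Rightarrow> complex mat) \<Rightarrow> (nat \<Rightarrow> complex mat) \<Rightarrow> (nat \<Rightarrow> complex mat)
    \<Rightarrow> complex \<Rightarrow> complex mat \<Rightarrow> complex mat \<Rightarrow> nat \<Rightarrow> complex mat" where
  "seqF m A B C E X0 X1 0 = X0"
| "seqF m A B C E X0 X1 (Suc 0) = X1"
| "seqF m A B C E X0 X1 (Suc (Suc k)) = minv (B (Suc k)) * ((E \<cdot>\<^sub>m 1\<^sub>m m - A (Suc k)) *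
     seqF m A B C E X0 X1 (Suc k) - C (Suc k) * seqF m A B C E X0 X1 k)"

declare seqF.simps[simp del]

context
  fixes m n :: nat and A B C :: "nat \<Rightarrow> complex mat" and E :: complex
  assumes Ac: "\<And>k. k \<in> {1..n} \<Longrightarrow> A k \<in> carrier_mat m m"
    and Bc: "\<And>k. k \<in> {1..n} \<Longrightarrow> B k \<in> carrier_mat m m"
    and Cc: "\<And>k. k \<in> {1..n} \<Longrightarrow> C k \<in> carrier_mat m m"
    and Bi: "\<And>k. k \<in> {1..n} \<Longrightarrow> invertible_mat (B k)"
begin

lemma seqF_carrier:
  assumes X0: "X0 \<in> carrier_mat m m" and X1: "X1 \<in> carrier_mat m m"
  shows "k \<le> Suc n \<Longrightarrow> seqF m A B C E X0 X1 k \<in> carrier_mat m m"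
proof (induct k rule: nat_less_induct)
  case (1 k)
  show ?case
  proof (cases k)
    case 0 then show ?thesis using X0 by (simp add: seqF.simps)
  next
    case (Suc k')
    show ?thesis
    proof (cases k')
      case 0 then show ?thesis using X1 Suc by (simp add: seqF.simps)
    next
      case (Suc k'')
      have kk: "Suc k'' \<in> {1..n}" using 1(2) Suc \<open>k = Suc k'\<close> by auto
      have IH: "seqF m A B C E X0 X1 (Suc k'') \<in> carrier_mat m m" "seqF m A B C E X0 X1 k'' \<in> carrier_mat m m"
        using 1 Suc \<open>k = Suc k'\<close> by auto
      have W: "E \<cdot>\<^sub>m 1\<^sub>m m - A (Suc k'') \<in> carrier_mat m m" using Ac[OF kk] by auto
      have P1: "(E \<cdot>\<^sub>m 1\<^sub>m m - A (Suc k'')) * seqF m A B C E X0 X1 (Suc k'') \<in> carrier_mat m m"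
        by (rule mult_carrier_mat[OF W IH(1)])
      have P2: "C (Suc k'') * seqF m A B C E X0 X1 k'' \<in> carrier_mat m m"
        by (rule mult_carrier_mat[OF Cc[OF kk] IH(2)])
      have P3: "(E \<cdot>\<^sub>m 1\<^sub>m m - A (Suc k'')) * seqF m A B C E X0 X1 (Suc k'')
         - C (Suc k'') * seqF m A B C E X0 X1 k'' \<in> carrier_mat m m"
        by (rule minus_carrier_mat[OF P2])
      have "minv (B (Suc k'')) \<in> carrier_mat m m" using minv_props[OF Bc[OF kk] Bi[OF kk]] by blast
      from mult_carrier_mat[OF this P3]
      show ?thesis using \<open>k = Suc k'\<close> Suc by (simp only: seqF.simps)
    qed
  qed
qed

lemma seqF_rec:
  assumes X0: "X0 \<in> carrier_mat m m" and X1: "X1 \<in> carrier_mat m m"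
    and k: "k \<in> {1..n}" and r: "r < m" and c: "c < m"
  shows "(C k * seqF m A B C E X0 X1 (k - 1)) $$ (r,c)
       + ((- (E \<cdot>\<^sub>m 1\<^sub>m m - A k)) * seqF m A B C E X0 X1 k) $$ (r,c)
       + (B k * seqF m A B C E X0 X1 (Suc k)) $$ (r,c) = 0"
proof -
  obtain k' where k': "k = Suc k'" using k by (cases k) auto
  let ?F = "seqF m A B C E X0 X1"
  have F1: "?F k \<in> carrier_mat m m" and F0: "?F k' \<in> carrier_mat m m"
    using seqF_carrier[OF X0 X1] k k' by auto
  let ?W = "E \<cdot>\<^sub>m 1\<^sub>m m - A k"
  have W: "?W \<in> carrier_mat m m" using Ac[OF k] by auto
  note mv = minv_props[OF Bc[OF k] Bi[OF k]]
  have "B k * ?F (Suc k) = B k * (minv (B k) * (?W * ?F k - C k * ?F k'))"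
    unfolding k' by (simp only: seqF.simps)
  also have "\<dots> = (B k * minv (B k)) * (?W * ?F k - C k * ?F k')"
    using mv Bc[OF k] W F1 F0 Cc[OF k] by (subst assoc_mult_mat) auto
  also have "\<dots> = ?W * ?F k - C k * ?F k'"
  proof -
    have Xc: "?W * ?F k - C k * ?F k' \<in> carrier_mat m m" using W F1 F0 Cc[OF k] by auto
    have "(B k * minv (B k)) * (?W * ?F k - C k * ?F k') = 1\<^sub>m m * (?W * ?F k - C k * ?F k')"
      using mv by (simp only:)
    also have "\<dots> = ?W * ?F k - C k * ?F k'" by (rule left_mult_one_mat[OF Xc])
    finally show ?thesis .
  qed
  finally have eq: "B k * ?F (Suc k) = ?W * ?F k - C k * ?F k'" .
  have e1: "(B k * ?F (Suc k)) $$ (r,c) = (?W * ?F k) $$ (r,c) - (C k * ?F k') $$ (r,c)"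
    unfolding eq using F0 Cc[OF k] r c by (intro index_minus_mat(1)) auto
  have e2: "((- ?W) * ?F k) $$ (r,c) = - (?W * ?F k) $$ (r,c)"
    using W F1 r c by (subst uminus_mult_left_mat) auto
  have e3: "k - 1 = k'" using k' by simp
  have h: "\<And>a b c x y::complex. b = -x \<Longrightarrow> c = x - y \<Longrightarrow> a = y \<Longrightarrow> a + b + c = 0" by simp
  show ?thesis by (rule h[OF e2 e1]) (simp only: e3)
qed

abbreviation "F0 \<equiv> seqF m A B C E (1\<^sub>m m) (0\<^sub>m m m)"
abbreviation "F1 \<equiv> seqF m A B C E (0\<^sub>m m m) (1\<^sub>m m)"

lemma tprod_F:
  "k \<le> n \<Longrightarrow> tprod m A B C k E = four_block_mat (F1 (Suc k)) (F0 (Suc k)) (F1 k) (F0 k)"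
proof (induct k)
  case 0
  then show ?case by (simp add: mult_2 seqF.simps)
next
  case (Suc k)
  have kk: "Suc k \<in> {1..n}" using Suc by auto
  note mv = minv_props[OF Bc[OF kk] Bi[OF kk]]
  have c: "F0 (Suc (Suc k)) \<in> carrier_mat m m" "F1 (Suc (Suc k)) \<in> carrier_mat m m"
    "F0 (Suc k) \<in> carrier_mat m m" "F1 (Suc k) \<in> carrier_mat m m"
    "F0 k \<in> carrier_mat m m" "F1 k \<in> carrier_mat m m"
    using Suc.prems by (auto intro!: seqF_carrier simp del: seqF.simps(3))
  let ?W = "E \<cdot>\<^sub>m 1\<^sub>m m - A (Suc k)"
  have W: "?W \<in> carrier_mat m m" using Ac[OF kk] by auto
  have M: "minv (B (Suc k)) * ?W * Y + (- (minv (B (Suc k)) * C (Suc k))) * Z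
      = minv (B (Suc k)) * (?W * Y - C (Suc k) * Z)"
    if Y: "Y \<in> carrier_mat m m" and Z: "Z \<in> carrier_mat m m" for Y Z
  proof -
    have "minv (B (Suc k)) * ?W * Y = minv (B (Suc k)) * (?W * Y)"
      using mv W Y by (subst assoc_mult_mat) auto
    moreover have "(- (minv (B (Suc k)) * C (Suc k))) * Z = - (minv (B (Suc k)) * (C (Suc k) * Z))"
      using mv Cc[OF kk] Z by (simp, subst assoc_mult_mat) auto
    moreover have "minv (B (Suc k)) * (?W * Y - C (Suc k) * Z) =
       minv (B (Suc k)) * (?W * Y) - minv (B (Suc k)) * (C (Suc k) * Z)"
      using mv W Y Z Cc[OF kk] by (subst mult_minus_distrib_mat) auto
    moreover have "minv (B (Suc k)) * (?W * Y) - minv (B (Suc k)) * (C (Suc k) * Z)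
       = minv (B (Suc k)) * (?W * Y) + - (minv (B (Suc k)) * (C (Suc k) * Z))"
      using mv W Y Z Cc[OF kk] by (intro minus_add_uminus_mat[of _ m m]) auto
    ultimately show ?thesis by simp
  qed
  have IH: "tprod m A B C k E = four_block_mat (F1 (Suc k)) (F0 (Suc k)) (F1 k) (F0 k)"
    using Suc by simp
  have "tprod m A B C (Suc k) E = tstep m A B C (Suc k) E * tprod m A B C k E" by (simp only: tprod.simps)
  also have "\<dots> = four_block_mat (minv (B (Suc k)) * ?W) (- (minv (B (Suc k)) * C (Suc k))) (1\<^sub>m m) (0\<^sub>m m m)
      * four_block_mat (F1 (Suc k)) (F0 (Suc k)) (F1 k) (F0 k)"
    by (simp only: tstep_def IH)
  also have "\<dots> = four_block_mat
      (minv (B (Suc k)) * ?W * F1 (Suc k) + (- (minv (B (Suc k)) * C (Suc k))) * F1 k)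
      (minv (B (Suc k)) * ?W * F0 (Suc k) + (- (minv (B (Suc k)) * C (Suc k))) * F0 k)
      (1\<^sub>m m * F1 (Suc k) + 0\<^sub>m m m * F1 k) (1\<^sub>m m * F0 (Suc k) + 0\<^sub>m m m * F0 k)"
    using mv W Cc[OF kk] c by (intro mult_four_block_mat) auto
  also have "\<dots> = four_block_mat (F1 (Suc (Suc k))) (F0 (Suc (Suc k))) (F1 (Suc k)) (F0 (Suc k))"
  proof -
    have e1: "minv (B (Suc k)) * ?W * F1 (Suc k) + (- (minv (B (Suc k)) * C (Suc k))) * F1 k = F1 (Suc (Suc k))"
      by (simp only: seqF.simps(3)) (rule M[OF c(4) c(6)])
    have e2: "minv (B (Suc k)) * ?W * F0 (Suc k) + (- (minv (B (Suc k)) * C (Suc k))) * F0 k = F0 (Suc (Suc k))"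
      by (simp only: seqF.simps(3)) (rule M[OF c(3) c(5)])
    have e3: "1\<^sub>m m * F1 (Suc k) + 0\<^sub>m m m * F1 k = F1 (Suc k)"
      using c(4) c(6) by (simp add: left_mult_zero_mat[of _ m] left_mult_one_mat[of _ m])
    have e4: "1\<^sub>m m * F0 (Suc k) + 0\<^sub>m m m * F0 k = F0 (Suc k)"
      using c(3) c(5) by (simp add: left_mult_zero_mat[of _ m] left_mult_one_mat[of _ m])
    show ?thesis by (simp only: e1 e2 e3 e4)
  qed
  finally show ?case .
qed

end


definition Nb :: "nat \<Rightarrow> nat \<Rightarrow> (nat \<Rightarrow> complex mat) \<Rightarrow> (nat \<Rightarrow> complex mat) \<Rightarrow> (nat \<Rightarrow> complex mat)
    \<Rightarrow> complex \<Rightarrow> complex \<Rightarrow> nat \<Rightarrow> nat \<Rightarrow> complex mat" where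
  "Nb m n A B C E z i j =
    (if i = 0 then (if j = 0 then (-z) \<cdot>\<^sub>m 1\<^sub>m m else if j = n then 1\<^sub>m m else 0\<^sub>m m m)
     else if i \<le> n then (if j + 1 = i then C i else if j = i then - (E \<cdot>\<^sub>m 1\<^sub>m m - A i)
        else if j = i + 1 then B i else 0\<^sub>m m m)
     else (if j = n + 1 then 1\<^sub>m m else if j = 1 then (-z) \<cdot>\<^sub>m 1\<^sub>m m else 0\<^sub>m m m))"

lemma mult_smult_one_entry: fixes X :: "complex mat" shows
  "X \<in> carrier_mat m m \<Longrightarrow> r < m \<Longrightarrow> c < m \<Longrightarrow> (X * (a \<cdot>\<^sub>m 1\<^sub>m m)) $$ (r,c) = a * X $$ (r,c)"
proof -
  assume X: "X \<in> carrier_mat m m" and rc: "r < m" "c < m"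
  have "X * (a \<cdot>\<^sub>m 1\<^sub>m m) = a \<cdot>\<^sub>m (X * 1\<^sub>m m)"
    by (rule mult_smult_distrib[OF X one_carrier_mat])
  also have "\<dots> = a \<cdot>\<^sub>m X" using X by simp
  finally show ?thesis using X rc by simp
qed

context
  fixes m n :: nat and A B C :: "nat \<Rightarrow> complex mat" and E z :: complex
  assumes Ac: "\<And>k. k \<in> {1..n} \<Longrightarrow> A k \<in> carrier_mat m m"
    and Bc: "\<And>k. k \<in> {1..n} \<Longrightarrow> B k \<in> carrier_mat m m"
    and Cc: "\<And>k. k \<in> {1..n} \<Longrightarrow> C k \<in> carrier_mat m m"
    and n3: "n \<ge> 3"
    and z0: "z \<noteq> 0"
begin

lemma Nb_carrier: "Nb m n A B C E z i j \<in> carrier_mat m m"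
proof -
  have "i \<in> {1..n} \<Longrightarrow> - (E \<cdot>\<^sub>m 1\<^sub>m m - A i) \<in> carrier_mat m m" for i
    using Ac[of i] by (intro uminus_carrier_mat minus_carrier_mat) auto
  then show ?thesis unfolding Nb_def using Ac Bc Cc by auto
qed

definition "Na i j = (if j = n then (if i = 0 then 0\<^sub>m m m else if i = 1 then inverse z \<cdot>\<^sub>m C 1
     else Nb m n A B C E z i n) else Nb m n A B C E z i j)"

definition "N2 i j = (if j = 1 then (if i = n then z \<cdot>\<^sub>m B n else if i = n + 1 then 0\<^sub>m m m
     else Na i 1) else Na i j)"

lemma det_Na: "det (blk (n+2) m Na) = det (blk (n+2) m (Nb m n A B C E z))"
proof (rule det_blk_colop[of "n+2" "Nb m n A B C E z" m "{0}" "\<lambda>_. inverse z \<cdot>\<^sub>m 1\<^sub>m m" n])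
  fix i r c assume i: "i < n+2" and r: "r < m" and c: "c < m"
  have C1: "C 1 \<in> carrier_mat m m" using Cc n3 by auto
  show "Na i n $$ (r,c) = Nb m n A B C E z i n $$ (r,c) +
     (\<Sum>p\<in>{0}. (Nb m n A B C E z i p * (inverse z \<cdot>\<^sub>m 1\<^sub>m m)) $$ (r,c))"
    using r c n3 z0 Nb_carrier[of i 0] C1
    by (auto simp: Na_def mult_smult_one_entry Nb_def)
qed (use Nb_carrier n3 in \<open>auto simp: Na_def\<close>)

lemma Na_carrier: "Na i j \<in> carrier_mat m m"
  using Nb_carrier Cc[of 1] n3 unfolding Na_def by auto

lemma det_N2: "det (blk (n+2) m N2) = det (blk (n+2) m Na)"
proof (rule det_blk_colop[of "n+2" Na m "{n+1}" "\<lambda>_. z \<cdot>\<^sub>m 1\<^sub>m m" 1])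
  fix i r c assume i: "i < n+2" and r: "r < m" and c: "c < m"
  have Bn: "B n \<in> carrier_mat m m" using Bc n3 by auto
  show "N2 i 1 $$ (r,c) = Na i 1 $$ (r,c) +
     (\<Sum>p\<in>{n+1}. (Na i p * (z \<cdot>\<^sub>m 1\<^sub>m m)) $$ (r,c))"
    using i r c n3 z0 Na_carrier[of i "n+1"] Bn
    by (auto simp: N2_def Na_def mult_smult_one_entry Nb_def)
qed (use Na_carrier n3 in \<open>auto simp: N2_def\<close>)

lemma N2_block: "k \<in> {1..n} \<Longrightarrow> l \<in> {1..n} \<Longrightarrow>
   N2 k l = (if k = l then - (E \<cdot>\<^sub>m 1\<^sub>m m - A k) else Hblock n A B C z k l)"
proof -
  have "dim_row (A 1) = m" using Ac[of 1] n3 by auto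
  then show "k \<in> {1..n} \<Longrightarrow> l \<in> {1..n} \<Longrightarrow> ?thesis"
    using n3 by (auto simp: N2_def Na_def Nb_def Hblock_def)
qed

lemma N2_row0: "l \<ge> 1 \<Longrightarrow> l \<le> n + 1 \<Longrightarrow> N2 0 l = 0\<^sub>m m m"
  using n3 by (auto simp: N2_def Na_def Nb_def)

lemma N2_rowlast: "l \<ge> 1 \<Longrightarrow> l \<le> n \<Longrightarrow> N2 (n+1) l = 0\<^sub>m m m"
  using n3 by (auto simp: N2_def Na_def Nb_def)

lemma det_blk_N2:
  assumes m1: "m \<ge> 1"
  shows "det (blk (n+2) m N2) = (-z)^m * det (Hmat m n A B C z - E \<cdot>\<^sub>m 1\<^sub>m (n*m))"
proof -
  let ?M = "blk (n+2) m N2"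
  have dm: "(i + m) div m = i div m + 1" "(i + m) mod m = i mod m" for i
    using m1 by auto
  have c: "?M \<in> carrier_mat (m + (n+1)*m) (m + (n+1)*m)"
    using blk_carrier[of "n+2" m N2] by (simp add: algebra_simps)
  have "det ?M = det (mat m m (\<lambda>(i,j). ?M$$(i,j))) *
      det (mat ((n+1)*m) ((n+1)*m) (\<lambda>(i,j). ?M$$(i+m,j+m)))"
  proof (rule det_split_UR0[OF c])
    fix i j assume ij: "i < m" "m \<le> j" "j < m + (n+1)*m"
    have "m div m \<le> j div m" using ij(2) by (rule div_le_mono)
    then have "j div m \<ge> 1" using m1 by simp
    moreover have "j div m \<le> n + 1" using ij m1 by (simp add: less_mult_imp_div_less less_Suc_eq_le[symmetric])
    moreover have "i div m = 0" using ij by simp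
    ultimately show "?M $$ (i,j) = 0" using ij N2_row0[of "j div m"] mod_lt_m[of j "n+2" m]
      by (simp add: blk_index algebra_simps)
  qed
  also have "mat m m (\<lambda>(i,j). ?M$$(i,j)) = (-z) \<cdot>\<^sub>m 1\<^sub>m m"
    using n3 m1 by (intro eq_matI) (auto simp: blk_index N2_def Na_def Nb_def algebra_simps)
  also have "det ((-z) \<cdot>\<^sub>m 1\<^sub>m m) = (-z)^m" by simp
  also have "det (mat ((n+1)*m) ((n+1)*m) (\<lambda>(i,j). ?M$$(i+m,j+m))) =
      det (Hmat m n A B C z - E \<cdot>\<^sub>m 1\<^sub>m (n*m))"
  proof -
    let ?L = "mat ((n+1)*m) ((n+1)*m) (\<lambda>(i,j). ?M$$(i+m,j+m))"
    have Lidx: "i < (n+1)*m \<Longrightarrow> j < (n+1)*m \<Longrightarrow>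
       ?L $$ (i,j) = N2 (i div m + 1) (j div m + 1) $$ (i mod m, j mod m)" for i j
      by (simp add: blk_index dm algebra_simps)
    have cL: "?L \<in> carrier_mat (n*m + m) (n*m + m)" by (simp add: algebra_simps)
    have "det ?L = det (mat (n*m) (n*m) (\<lambda>(i,j). ?L$$(i,j))) *
      det (mat m m (\<lambda>(i,j). ?L$$(i+n*m,j+n*m)))"
    proof (rule det_split_LL0[OF cL])
      fix i j assume ij: "n*m \<le> i" "i < n*m + m" "j < n*m"
      have "i div m = n" using ij m1
        by (metis add.commute div_nat_eqI mult.commute mult_Suc_right)
      moreover have "j div m < n" using ij by (simp add: less_mult_imp_div_less)
      ultimately show "?L $$ (i,j) = 0" using ij Lidx[of i j] N2_rowlast[of "j div m + 1"]
        mod_lt_m[of j n m] mod_lt_m[of i "n+1" m]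
        by (simp add: algebra_simps)
    qed
    also have "mat (n*m) (n*m) (\<lambda>(i,j). ?L$$(i,j)) = Hmat m n A B C z - E \<cdot>\<^sub>m 1\<^sub>m (n*m)"
    proof (rule eq_matI)
      fix i j assume "i < dim_row (Hmat m n A B C z - E \<cdot>\<^sub>m 1\<^sub>m (n*m))"
        "j < dim_col (Hmat m n A B C z - E \<cdot>\<^sub>m 1\<^sub>m (n*m))"
      then have ij: "i < n*m" "j < n*m" by (auto simp: Hmat_def)
      have k: "i div m + 1 \<in> {1..n}" "j div m + 1 \<in> {1..n}"
        using div_lt_N[OF ij(1)] div_lt_N[OF ij(2)] by auto
      have rc: "i mod m < m" "j mod m < m" using ij mod_lt_m by blast+
      have Ak: "A (i div m + 1) \<in> carrier_mat m m" using Ac k by blast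
      have eqiff: "(i = j) = (i div m = j div m \<and> i mod m = j mod m)"
        using divmod_eq_imp by blast
      show "mat (n*m) (n*m) (\<lambda>(i,j). ?L$$(i,j)) $$ (i,j) =
          (Hmat m n A B C z - E \<cdot>\<^sub>m 1\<^sub>m (n*m)) $$ (i,j)"
        using ij Lidx[of i j] N2_block[OF k] rc Ak eqiff
        by (auto simp: Hmat_def Hblock_def)
    qed (auto simp: Hmat_def)
    also have "mat m m (\<lambda>(i,j). ?L$$(i+n*m,j+n*m)) = 1\<^sub>m m"
    proof (rule eq_matI)
      fix i j assume "i < dim_row (1\<^sub>m m :: complex mat)" "j < dim_col (1\<^sub>m m :: complex mat)"
      then have ij: "i < m" "j < m" by auto
      have d: "(i + n*m) div m = n" "(i + n*m) mod m = i" "(j + n*m) div m = n" "(j + n*m) mod m = j"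
        using ij by auto
      have lt: "i + n*m < (n+1)*m" "j + n*m < (n+1)*m" using ij by auto
      have "N2 (n+1) (n+1) = 1\<^sub>m m" using n3 by (auto simp: N2_def Na_def Nb_def)
      then show "mat m m (\<lambda>(i,j). ?L$$(i+n*m,j+n*m)) $$ (i,j) = 1\<^sub>m m $$ (i,j)"
        using Lidx[OF lt] d ij by simp
    qed auto
    finally show ?thesis by simp
  qed
  finally show ?thesis by simp
qed

end


context
  fixes m n :: nat and A B C :: "nat \<Rightarrow> complex mat" and E z :: complex
  assumes Ac: "\<And>k. k \<in> {1..n} \<Longrightarrow> A k \<in> carrier_mat m m"
    and Bc: "\<And>k. k \<in> {1..n} \<Longrightarrow> B k \<in> carrier_mat m m"
    and Cc: "\<And>k. k \<in> {1..n} \<Longrightarrow> C k \<in> carrier_mat m m"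
    and Bi: "\<And>k. k \<in> {1..n} \<Longrightarrow> invertible_mat (B k)"
    and n3: "n \<ge> 3"
begin

abbreviation "G0 \<equiv> seqF m A B C E (1\<^sub>m m) (0\<^sub>m m m)"
abbreviation "G1 \<equiv> seqF m A B C E (0\<^sub>m m m) (1\<^sub>m m)"
abbreviation "Nz \<equiv> Nb m n A B C E z"

lemma Nz_carrier: "Nz i j \<in> carrier_mat m m"
proof -
  have "i \<in> {1..n} \<Longrightarrow> - (E \<cdot>\<^sub>m 1\<^sub>m m - A i) \<in> carrier_mat m m" for i
    using Ac[of i] by (intro uminus_carrier_mat minus_carrier_mat) auto
  then show ?thesis unfolding Nb_def using Ac Bc Cc by auto
qed

lemma G_carrier: "k \<le> Suc n \<Longrightarrow> G0 k \<in> carrier_mat m m \<and> G1 k \<in> carrier_mat m m"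
  using seqF_carrier[OF Ac Bc Cc Bi] by auto

lemma G_dims[simp]: "k \<le> Suc n \<Longrightarrow> dim_row (G0 k) = m \<and> dim_col (G0 k) = m \<and> dim_row (G1 k) = m \<and> dim_col (G1 k) = m"
  using G_carrier by auto

lemma G_base: "G0 0 = 1\<^sub>m m" "G0 1 = 0\<^sub>m m m" "G1 0 = 0\<^sub>m m m" "G1 1 = 1\<^sub>m m"
   "G0 (Suc 0) = 0\<^sub>m m m" "G1 (Suc 0) = 1\<^sub>m m"
  by (simp_all add: seqF.simps)

lemma row_sum:
  assumes i: "i \<in> {1..n}" and F: "\<And>p. p \<le> n+1 \<Longrightarrow> F p \<in> carrier_mat m m"
    and r: "r < m" and c: "c < m"
  shows "(\<Sum>p\<in>{0..n+1}. (Nz i p * F p) $$ (r,c)) =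
     (C i * F (i-1)) $$ (r,c) + ((- (E \<cdot>\<^sub>m 1\<^sub>m m - A i)) * F i) $$ (r,c)
     + (B i * F (Suc i)) $$ (r,c)"
proof -
  have sub: "{i-1, i, Suc i} \<subseteq> {0..n+1}" using i by auto
  have "(\<Sum>p\<in>{0..n+1}. (Nz i p * F p) $$ (r,c)) = (\<Sum>p\<in>{i-1, i, Suc i}. (Nz i p * F p) $$ (r,c))"
  proof (rule sum.mono_neutral_right[OF _ sub])
    show "\<forall>p\<in>{0..n + 1} - {i - 1, i, Suc i}. (Nz i p * F p) $$ (r, c) = 0"
    proof
      fix p assume p: "p \<in> {0..n + 1} - {i - 1, i, Suc i}"
      then have "Nz i p = 0\<^sub>m m m" using i by (auto simp: Nb_def)
      then show "(Nz i p * F p) $$ (r, c) = 0" using F[of p] p r c by simp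
    qed
  qed simp
  also have "\<dots> = (Nz i (i-1) * F (i-1)) $$ (r,c) + (Nz i i * F i) $$ (r,c) + (Nz i (Suc i) * F (Suc i)) $$ (r,c)"
  proof -
    have "i - 1 \<notin> {i, Suc i}" "i \<notin> {Suc i}" using i by auto
    then show ?thesis by (simp add: add.assoc)
  qed
  also have "Nz i (i-1) = C i" "Nz i i = - (E \<cdot>\<^sub>m 1\<^sub>m m - A i)" "Nz i (Suc i) = B i"
    using i by (auto simp: Nb_def)
  note eqs = this
  have "(Nz i (i-1) * F (i-1)) $$ (r,c) + (Nz i i * F i) $$ (r,c) + (Nz i (Suc i) * F (Suc i)) $$ (r,c)
     = (C i * F (i-1)) $$ (r,c) + ((- (E \<cdot>\<^sub>m 1\<^sub>m m - A i)) * F i) $$ (r,c)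
     + (B i * F (Suc i)) $$ (r,c)" by (simp only: eqs)
  finally show ?thesis .
qed

lemma row_zero:
  assumes i: "i \<in> {1..n}" and X0: "X0 \<in> carrier_mat m m" and X1: "X1 \<in> carrier_mat m m"
    and r: "r < m" and c: "c < m"
  shows "(\<Sum>p\<in>{0..n+1}. (Nz i p * seqF m A B C E X0 X1 p) $$ (r,c)) = 0"
proof -
  have "(\<Sum>p\<in>{0..n+1}. (Nz i p * seqF m A B C E X0 X1 p) $$ (r,c)) =
     (C i * seqF m A B C E X0 X1 (i-1)) $$ (r,c) + ((- (E \<cdot>\<^sub>m 1\<^sub>m m - A i)) * seqF m A B C E X0 X1 i) $$ (r,c)
     + (B i * seqF m A B C E X0 X1 (Suc i)) $$ (r,c)"
    using seqF_carrier[OF Ac Bc Cc Bi X0 X1] by (intro row_sum[OF i _ r c]) auto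
  also have "\<dots> = 0" by (rule seqF_rec[OF Ac Bc Cc Bi X0 X1 i r c])
  finally show ?thesis .
qed

lemma sum_split01: "(\<Sum>p\<in>{0..n+1}. g p) = g 0 + g 1 + (\<Sum>p\<in>{2..n+1}. (g p :: complex))"
  by (simp add: sum.atLeast_Suc_atMost numeral_2_eq_2 add.assoc)

definition "Nm i j = (if j = 0 then (if i = 0 then G0 n - z \<cdot>\<^sub>m 1\<^sub>m m else if i = n+1 then G0 (n+1)
     else 0\<^sub>m m m) else Nz i j)"

definition "N1 i j = (if j = 1 then (if i = 0 then G1 n else if i = n+1 then G1 (n+1) - z \<cdot>\<^sub>m 1\<^sub>m m
     else 0\<^sub>m m m) else Nm i j)"

lemma det_Nm: "det (blk (n+2) m Nm) = det (blk (n+2) m Nz)"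
proof (rule det_blk_colop[of "n+2" Nz m "{2..n+1}" G0 0])
  fix i r c assume i: "i < n+2" and r: "r < m" and c: "c < m"
  let ?g = "\<lambda>p. (Nz i p * G0 p) $$ (r,c)"
  show "Nm i 0 $$ (r,c) = Nz i 0 $$ (r,c) + (\<Sum>p\<in>{2..n+1}. ?g p)"
  proof (cases "i = 0 \<or> i = n+1")
    case True
    have Gn: "G0 n \<in> carrier_mat m m" "G0 (n+1) \<in> carrier_mat m m" using G_carrier by auto
    have "(\<Sum>p\<in>{2..n+1}. ?g p) = (\<Sum>p\<in>{2..n+1}. if p = (if i = 0 then n else n+1) then
         G0 (if i = 0 then n else n+1) $$ (r,c) else 0)"
      using True G_carrier n3 r c by (intro sum.cong) (auto simp: Nb_def)
    also have "\<dots> = G0 (if i = 0 then n else n+1) $$ (r,c)" using n3 by simp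
    finally show ?thesis using True Gn r c n3 by (auto simp: Nm_def Nb_def)
  next
    case False
    then have i1: "i \<in> {1..n}" using i by auto
    have h0: "?g 0 = Nz i 0 $$ (r,c)" using Nz_carrier[of i 0] r c by (simp add: G_base)
    have h1: "?g 1 = 0" using Nz_carrier[of i 1] r c by (simp add: G_base)
    have split: "(\<Sum>p\<in>{0..n+1}. ?g p) = ?g 0 + ?g 1 + (\<Sum>p\<in>{2..n+1}. ?g p)" by (rule sum_split01)
    have "Nz i 0 $$ (r,c) + (\<Sum>p\<in>{2..n+1}. ?g p) = (\<Sum>p\<in>{0..n+1}. ?g p)"
      using split h0 h1 by (simp only: add_0_right)
    also have "\<dots> = 0" by (rule row_zero[OF i1 _ _ r c]) auto
    finally show ?thesis using False r c by (simp add: Nm_def)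
  qed
qed (use Nz_carrier G_carrier in \<open>auto simp: Nm_def\<close>)

lemma det_N1: "det (blk (n+2) m N1) = det (blk (n+2) m Nm)"
proof (rule det_blk_colop[of "n+2" Nm m "{2..n+1}" G1 1])
  fix i r c assume i: "i < n+2" and r: "r < m" and c: "c < m"
  let ?g = "\<lambda>p. (Nz i p * G1 p) $$ (r,c)"
  have eqg: "(\<Sum>p\<in>{2..n+1}. (Nm i p * G1 p) $$ (r,c)) = (\<Sum>p\<in>{2..n+1}. ?g p)"
    by (intro sum.cong) (auto simp: Nm_def)
  show "N1 i 1 $$ (r,c) = Nm i 1 $$ (r,c) + (\<Sum>p\<in>{2..n+1}. (Nm i p * G1 p) $$ (r,c))"
    unfolding eqg
  proof (cases "i = 0 \<or> i = n+1")
    case True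
    have Gn: "G1 n \<in> carrier_mat m m" "G1 (n+1) \<in> carrier_mat m m" using G_carrier by auto
    have "(\<Sum>p\<in>{2..n+1}. ?g p) = (\<Sum>p\<in>{2..n+1}. if p = (if i = 0 then n else n+1) then
         G1 (if i = 0 then n else n+1) $$ (r,c) else 0)"
      using True G_carrier n3 r c by (intro sum.cong) (auto simp: Nb_def)
    also have "\<dots> = G1 (if i = 0 then n else n+1) $$ (r,c)" using n3 by simp
    finally show "N1 i 1 $$ (r,c) = Nm i 1 $$ (r,c) + (\<Sum>p\<in>{2..n+1}. ?g p)"
      using True Gn r c n3 by (auto simp: N1_def Nm_def Nb_def)
  next
    case False
    then have i1: "i \<in> {1..n}" using i by auto
    have h1: "?g 1 = Nz i 1 $$ (r,c)" using Nz_carrier[of i 1] r c by (simp add: G_base)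
    have h0: "?g 0 = 0" using Nz_carrier[of i 0] r c by (simp add: G_base)
    have split: "(\<Sum>p\<in>{0..n+1}. ?g p) = ?g 0 + ?g 1 + (\<Sum>p\<in>{2..n+1}. ?g p)" by (rule sum_split01)
    have "Nz i 1 $$ (r,c) + (\<Sum>p\<in>{2..n+1}. ?g p) = (\<Sum>p\<in>{0..n+1}. ?g p)"
      using split h0 h1 by (simp only: add_0_left)
    also have "\<dots> = 0" by (rule row_zero[OF i1 _ _ r c]) auto
    finally show "N1 i 1 $$ (r,c) = Nm i 1 $$ (r,c) + (\<Sum>p\<in>{2..n+1}. ?g p)"
      using False r c by (simp add: N1_def Nm_def)
  qed
qed (use Nz_carrier G_carrier in \<open>auto simp: Nm_def N1_def\<close>)

lemma divmod_shift: "i < m \<Longrightarrow> (i + k*m) div m = (k::nat) \<and> (i + k*m) mod m = i"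
  by (metis add.commute div_less div_mult_self1 mod_less mod_mult_self1 not_less0 plus_nat.add_0 add.right_neutral)

lemma N1_low: "k \<in> {1..n} \<Longrightarrow> l \<le> 1 \<Longrightarrow> N1 k l = 0\<^sub>m m m"
  by (auto simp: N1_def Nm_def)

lemma N1_high: "l \<ge> 2 \<Longrightarrow> N1 k l = Nz k l"
  by (auto simp: N1_def Nm_def)

lemma det_blk_N1:
  assumes m1: "m \<ge> 1"
  shows "cmod (det (blk (n+2) m N1)) =
    cmod (det (tprod m A B C n E - z \<cdot>\<^sub>m 1\<^sub>m (2*m))) * (\<Prod>a<n. cmod (det (B (Suc a))))"
proof -
  let ?M = "blk (n+2) m N1"
  have cM: "?M \<in> carrier_mat (m + (n+1)*m) (m + (n+1)*m)"
    using blk_carrier[of "n+2" m N1] by (simp add: algebra_simps)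
  define R where "R = mat (m + (n+1)*m) (m + (n+1)*m)
     (\<lambda>(i,j). ?M $$ (if i < m then i + (n+1)*m else i - m, j))"
  have "det ?M = (-1)^(m * ((n+1)*m)) * det R"
    unfolding R_def by (rule det_swap_rows[OF cM])
  then have e1: "cmod (det ?M) = cmod (det R)" by (simp add: norm_mult norm_power)
  have Ridx: "i < (n+2)*m \<Longrightarrow> j < (n+2)*m \<Longrightarrow> R $$ (i,j) =
     (if i < m then N1 (n+1) (j div m) $$ (i, j mod m)
      else N1 ((i - m) div m) (j div m) $$ ((i-m) mod m, j mod m))" for i j
  proof -
    assume ij: "i < (n+2)*m" "j < (n+2)*m"
    show ?thesis
    proof (cases "i < m")
      case True
      have "(i + (n+1)*m) div m = n+1" "(i + (n+1)*m) mod m = i" using divmod_shift[OF True, of "n+1"] by blast+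
      moreover have "i + (n+1)*m < (n+2)*m" using True by simp
      ultimately show ?thesis using True ij unfolding R_def by (simp add: blk_index algebra_simps)
    next
      case False
      have "i - m < (n+2)*m" using ij by simp
      then show ?thesis using False ij unfolding R_def by (simp add: blk_index algebra_simps)
    qed
  qed
  have eqd: "2*m + n*m = m + (n+1)*m" by (simp add: algebra_simps)
  have cR: "R \<in> carrier_mat (2*m + n*m) (2*m + n*m)" unfolding R_def eqd by (rule mat_carrier)
  have "det R = det (mat (2*m) (2*m) (\<lambda>(i,j). R$$(i,j))) *
      det (mat (n*m) (n*m) (\<lambda>(i,j). R$$(i+2*m,j+2*m)))"
  proof (rule det_split_LL0[OF cR])
    fix i j assume ij: "2*m \<le> i" "i < 2*m + n*m" "j < 2*m"
    have k: "(i - m) div m \<in> {1..n}"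
    proof -
      have "m div m \<le> (i - m) div m" using ij by (intro div_le_mono) auto
      moreover have "(i - m) div m < n + 1" using ij by (intro div_lt_N) (auto simp: algebra_simps)
      ultimately show ?thesis using m1 by auto
    qed
    have "j div m \<le> 1" using ij by (simp add: less_mult_imp_div_less less_Suc_eq_le[symmetric])
    then show "R $$ (i,j) = 0" using Ridx[of i j] ij N1_low[OF k, of "j div m"]
      mod_lt_m[of j 2 m] mod_lt_m[of "i - m" "n+1" m] by (auto simp: algebra_simps)
  qed
  also have "mat (n*m) (n*m) (\<lambda>(i,j). R$$(i+2*m,j+2*m)) = blk n m (\<lambda>a b. Nz (a+1) (b+2))"
  proof (rule eq_matI)
    fix i j assume "i < dim_row (blk n m (\<lambda>a b. Nz (a+1) (b+2)))" "j < dim_col (blk n m (\<lambda>a b. Nz (a+1) (b+2)))"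
    then have ij: "i < n*m" "j < n*m" by auto
    have d: "(i + 2*m - m) div m = i div m + 1" "(i + 2*m - m) mod m = i mod m"
       "(j + 2*m) div m = j div m + 2" "(j + 2*m) mod m = j mod m" using m1 by auto
    show "mat (n*m) (n*m) (\<lambda>(i,j). R$$(i+2*m,j+2*m)) $$ (i,j) = blk n m (\<lambda>a b. Nz (a+1) (b+2)) $$ (i,j)"
      using ij Ridx[of "i+2*m" "j+2*m"] d N1_high[of "j div m + 2" "i div m + 1"]
      by (simp add: blk_index algebra_simps)
  qed auto
  also have "det (blk n m (\<lambda>a b. Nz (a+1) (b+2))) = (\<Prod>a<n. det (B (Suc a)))"
  proof -
    have "det (blk n m (\<lambda>a b. Nz (a+1) (b+2))) = (\<Prod>a<n. det (Nz (a+1) (a+2)))"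
    proof (rule det_blk_lower)
      fix i j show "Nz (i+1) (j+2) \<in> carrier_mat m m" by (rule Nz_carrier)
    next
      fix i j assume "i < j" "j < n" then show "Nz (i+1) (j+2) = 0\<^sub>m m m" by (auto simp: Nb_def)
    qed
    also have "\<dots> = (\<Prod>a<n. det (B (Suc a)))"
      by (intro prod.cong) (auto simp: Nb_def)
    finally show ?thesis .
  qed
  also have "det (mat (2*m) (2*m) (\<lambda>(i,j). R$$(i,j))) =
      (-1)^(m*m) * det (tprod m A B C n E - z \<cdot>\<^sub>m 1\<^sub>m (2*m))"
  proof -
    let ?T = "tprod m A B C n E - z \<cdot>\<^sub>m 1\<^sub>m (2*m)"
    have T: "tprod m A B C n E = four_block_mat (G1 (Suc n)) (G0 (Suc n)) (G1 n) (G0 n)"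
      using tprod_F[where m=m and n=n and A=A and B=B and C=C and E=E, OF Ac Bc Cc Bi, of n] by blast
    have cT: "?T \<in> carrier_mat (m+m) (m+m)" using G_carrier[of n] G_carrier[of "Suc n"]
      unfolding T by (auto simp: mult_2)
    have "det ?T = (-1)^(m*m) * det (mat (m+m) (m+m) (\<lambda>(i,j). ?T $$ (i, if j < m then j + m else j - m)))"
      by (rule det_swap_cols[OF cT])
    also have "mat (m+m) (m+m) (\<lambda>(i,j). ?T $$ (i, if j < m then j + m else j - m)) =
        mat (2*m) (2*m) (\<lambda>(i,j). R$$(i,j))"
    proof (rule eq_matI)
      fix i j assume "i < dim_row (mat (2*m) (2*m) (\<lambda>(i,j). R$$(i,j)))" "j < dim_col (mat (2*m) (2*m) (\<lambda>(i,j). R$$(i,j)))"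
      then have ij: "i < 2*m" "j < 2*m" by auto
      have lt: "i < (n+2)*m" "j < (n+2)*m" using ij by (auto simp: algebra_simps)
      have dims: "dim_row (G1 (Suc n)) = m" "dim_col (G1 (Suc n)) = m" "dim_row (G0 n) = m" "dim_col (G0 n) = m"
        using G_carrier[of n] G_carrier[of "Suc n"] by auto
      have rhs: "R $$ (i,j) = (if i < m then N1 (n+1) (j div m) $$ (i, j mod m)
          else N1 ((i - m) div m) (j div m) $$ ((i-m) mod m, j mod m))" using Ridx[OF lt] .
      show "mat (m+m) (m+m) (\<lambda>(i,j). ?T $$ (i, if j < m then j + m else j - m)) $$ (i,j) =
          mat (2*m) (2*m) (\<lambda>(i,j). R$$(i,j)) $$ (i,j)"
      proof (cases "i < m")
        case True
        show ?thesis
        proof (cases "j < m")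
          case True2: True
          have "j div m = 0" "j mod m = j" using True2 by auto
          then show ?thesis using True True2 ij rhs dims unfolding T
            by (simp add: N1_def Nm_def mult_2)
        next
          case False2: False
          have "j div m = 1" "j mod m = j - m" "j - m < m" using False2 ij by (auto simp: le_div_geq le_mod_geq mult_2)
          then show ?thesis using True False2 ij rhs dims unfolding T
            by (simp add: N1_def Nm_def mult_2)
        qed
      next
        case False
        have di: "(i - m) div m = 0" "(i - m) mod m = i - m" using False ij by auto
        show ?thesis
        proof (cases "j < m")
          case True2: True
          have "j div m = 0" "j mod m = j" using True2 by auto
          then show ?thesis using False True2 ij rhs dims di unfolding T
            by (simp add: N1_def Nm_def mult_2) linarith
        next
          case False2: False
          have "j div m = 1" "j mod m = j - m" "j - m < m" using False2 ij by (auto simp: le_div_geq le_mod_geq mult_2)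
          then show ?thesis using False False2 ij rhs dims di n3 unfolding T
            by (simp add: N1_def Nm_def Nb_def mult_2)
        qed
      qed
    qed (auto simp: mult_2)
    finally show ?thesis by simp
  qed
  finally have "det R = (-1)^(m*m) * det (tprod m A B C n E - z \<cdot>\<^sub>m 1\<^sub>m (2*m)) * (\<Prod>a<n. det (B (Suc a)))" .
  then show ?thesis using e1 by (simp add: norm_mult norm_power prod_norm)
qed

lemma det_relation:
  assumes m1: "m \<ge> 1" and z0: "z \<noteq> 0"
  shows "cmod z ^ m * cmod (det (Hmat m n A B C z - E \<cdot>\<^sub>m 1\<^sub>m (n*m))) =
    cmod (det (tprod m A B C n E - z \<cdot>\<^sub>m 1\<^sub>m (2*m))) * (\<Prod>a<n. cmod (det (B (Suc a))))"
proof -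
  note inst = det_Na[where m=m and n=n and A=A and B=B and C=C and E=E and z=z, OF Ac Bc Cc n3 z0]
    det_N2[where m=m and n=n and A=A and B=B and C=C and E=E and z=z, OF Ac Bc Cc n3 z0]
    det_blk_N2[where m=m and n=n and A=A and B=B and C=C and E=E and z=z, OF Ac Bc Cc n3 z0 m1]
  have "det (blk (n+2) m Nz) = (-z)^m * det (Hmat m n A B C z - E \<cdot>\<^sub>m 1\<^sub>m (n*m))"
    using inst by simp
  moreover have "cmod (det (blk (n+2) m Nz)) =
    cmod (det (tprod m A B C n E - z \<cdot>\<^sub>m 1\<^sub>m (2*m))) * (\<Prod>a<n. cmod (det (B (Suc a))))"
    using det_blk_N1[OF m1] det_N1 det_Nm by simp
  ultimately show ?thesis by (simp add: norm_mult norm_power)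
qed

end


lemma exp_int_zero:
  assumes n: "n \<ge> 1"
  shows "((\<lambda>t::real. exp (t *\<^sub>R (\<i> * of_nat n))) has_integral 0) {0..2*pi}"
proof -
  let ?a = "\<i> * (of_nat n :: complex)"
  have a0: "?a \<noteq> 0" using n by simp
  have "((\<lambda>t. exp (t *\<^sub>R ?a) * ?a) has_integral (exp ((2*pi) *\<^sub>R ?a) - exp (0 *\<^sub>R ?a))) {0..2*pi}"
    by (rule fundamental_theorem_of_calculus) (auto intro: exp_scaleR_has_vector_derivative_right)
  moreover have "exp ((2*pi) *\<^sub>R ?a) = 1"
  proof -
    have "(2*pi) *\<^sub>R ?a = 2 * pi * of_nat n * \<i>" by (simp add: scaleR_conv_of_real)
    also have "\<dots> = of_nat n * (2 * of_real pi * \<i>)" by simp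
    finally show ?thesis by (simp only: exp_of_nat_mult exp_two_pi_i power_one)
  qed
  ultimately have "((\<lambda>t. exp (t *\<^sub>R ?a) * ?a) has_integral 0) {0..2*pi}" by simp
  then have "((\<lambda>t. exp (t *\<^sub>R ?a) * ?a * inverse ?a) has_integral 0 * inverse ?a) {0..2*pi}"
    by (rule has_integral_mult_left)
  moreover have "(\<lambda>t. exp (t *\<^sub>R ?a) * ?a * inverse ?a) = (\<lambda>t. exp (t *\<^sub>R ?a))"
  proof -
    have inv: "?a * inverse ?a = 1" by (rule right_inverse[OF a0])
    show ?thesis by (intro ext) (metis inv mult.assoc mult_1_right)
  qed
  ultimately show ?thesis by simp
qed

lemma exp_it_pow: "exp (\<i> * complex_of_real t) ^ n = exp (t *\<^sub>R (\<i> * of_nat n))"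
proof -
  have "exp (\<i> * complex_of_real t) ^ n = exp (of_nat n * (\<i> * complex_of_real t))"
    by (rule exp_of_nat_mult[symmetric])
  also have "of_nat n * (\<i> * complex_of_real t) = t *\<^sub>R (\<i> * of_nat n)"
    by (simp add: scaleR_conv_of_real)
  finally show ?thesis .
qed

lemma J1:
  assumes c: "cmod c < 1"
  shows "((\<lambda>t. ln (cmod (1 - c * exp (\<i> * complex_of_real t)))) has_integral 0) {0..2*pi}"
proof -
  define e where "e t = exp (\<i> * complex_of_real t)" for t
  have ne: "norm (e t) = 1" for t unfolding e_def by simp
  define f where "f n t = - ((c * e t) ^ n) / of_nat n" for n t
  have fsum: "(\<lambda>n. f n t) sums ln (1 - c * e t)" for t
  proof -
    have "cmod (- (c * e t)) < 1" using c ne by (simp add: norm_mult)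
    from Ln_series'[OF this] show ?thesis unfolding f_def by simp
  qed
  have fb: "norm (f n t) \<le> cmod c ^ n" for n t
  proof (cases n)
    case 0 then show ?thesis by (simp add: f_def)
  next
    case (Suc k)
    have "norm (f n t) = cmod c ^ n / real n" unfolding f_def
      by (simp add: norm_divide norm_power norm_mult ne)
    also have "\<dots> \<le> cmod c ^ n / 1"
      by (rule divide_left_mono) (use Suc in auto)
    also have "\<dots> = cmod c ^ n" by simp
    finally show ?thesis .
  qed
  have "summable (\<lambda>n. cmod c ^ n)" using c by (simp add: summable_geometric)
  then have ul: "uniform_limit {0..2*pi} (\<lambda>N t. \<Sum>i<N. f i t) (\<lambda>t. suminf (\<lambda>i. f i t)) sequentially"
    using fb by (intro Weierstrass_m_test) auto
  have cont: "continuous_on {0..2*pi} (\<lambda>t. \<Sum>i<N. f i t)" for N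
  proof -
    have eq: "(\<lambda>t. \<Sum>i<N. f i t) = (\<lambda>t. \<Sum>i<N. (- ((c * exp (\<i> * complex_of_real t)) ^ i)) * inverse (of_nat i))"
      by (simp add: f_def e_def divide_inverse)
    show ?thesis unfolding eq by (intro continuous_intros)
  qed
  obtain I J where I: "\<And>N. ((\<lambda>t. \<Sum>i<N. f i t) has_integral I N) {0..2*pi}"
    and J: "((\<lambda>t. suminf (\<lambda>i. f i t)) has_integral J) {0..2*pi}" and IJ: "I \<longlonglongrightarrow> J"
    by (rule uniform_limit_integral[OF ul cont]) auto
  have fint: "((\<lambda>t. f i t) has_integral 0) {0..2*pi}" for i
  proof (cases i)
    case 0 then show ?thesis by (simp add: f_def)
  next
    case (Suc k)
    have "((\<lambda>t. (- (c^i) / of_nat i) * exp (t *\<^sub>R (\<i> * of_nat i))) has_integral (- (c^i) / of_nat i) * 0) {0..2*pi}"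
      using Suc by (intro has_integral_mult_right exp_int_zero) auto
    moreover have "f i t = (- (c^i) / of_nat i) * exp (t *\<^sub>R (\<i> * of_nat i))" for t
      unfolding f_def e_def by (simp add: power_mult_distrib exp_it_pow)
    ultimately show ?thesis by simp
  qed
  have "I N = 0" for N
  proof -
    have "((\<lambda>t. \<Sum>i<N. f i t) has_integral (\<Sum>i<N. 0)) {0..2*pi}"
      by (intro has_integral_sum fint) auto
    then have h: "((\<lambda>t. \<Sum>i<N. f i t) has_integral 0) {0..2*pi}" by simp
    from has_integral_unique[OF I[of N] h] show ?thesis .
  qed
  then have "I = (\<lambda>_. 0)" by (intro ext)
  then have "(\<lambda>_. 0) \<longlonglongrightarrow> J" using IJ by simp
  then have "J = 0" by (simp add: LIMSEQ_const_iff)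
  moreover have "suminf (\<lambda>i. f i t) = ln (1 - c * e t)" for t using fsum[of t] by (simp add: sums_iff)
  ultimately have L: "((\<lambda>t. ln (1 - c * e t)) has_integral 0) {0..2*pi}" using J by simp
  have "((Re \<circ> (\<lambda>t. ln (1 - c * e t))) has_integral Re 0) {0..2*pi}"
    by (rule has_integral_linear[OF L bounded_linear_Re])
  moreover have "1 - c * e t \<noteq> 0" for t
  proof
    assume "1 - c * e t = 0"
    then have "c * e t = 1" by simp
    then have "cmod (c * e t) = 1" by simp
    then show False using c ne by (simp add: norm_mult)
  qed
  ultimately show ?thesis by (simp add: o_def e_def)
qed


lemma fin_circle: "finite {t \<in> {0..2*pi}. exp (\<i> * complex_of_real t) = w}"
proof (cases "{t \<in> {0..2*pi}. exp (\<i> * complex_of_real t) = w} = {}")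
  case True then show ?thesis by (metis finite.emptyI)
next
  case False
  then obtain t0 where t0: "t0 \<in> {0..2*pi}" "exp (\<i> * complex_of_real t0) = w" by blast
  have "{t \<in> {0..2*pi}. exp (\<i> * complex_of_real t) = w} \<subseteq> {t0 - 2*pi, t0, t0 + 2*pi}"
  proof
    fix t assume t: "t \<in> {t \<in> {0..2*pi}. exp (\<i> * complex_of_real t) = w}"
    then have "exp (\<i> * complex_of_real t) = exp (\<i> * complex_of_real t0)" using t0 by simp
    then obtain k :: int where k: "\<i> * complex_of_real t = \<i> * complex_of_real t0 + (of_int (2 * k) * pi) * \<i>"
      unfolding exp_eq by blast
    have "Im (\<i> * complex_of_real t) = Im (\<i> * complex_of_real t0 + (of_int (2 * k) * pi) * \<i>)"
      using k by simp
    then have tk: "t = t0 + 2 * k * pi" by simp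
    have "\<bar>2 * k * pi\<bar> \<le> 2 * pi" using t t0 tk by auto
    then have "\<bar>real_of_int k\<bar> \<le> 1" by (simp add: abs_mult)
    then have "k \<in> {-1, 0, 1}" by auto
    then show "t \<in> {t0 - 2*pi, t0, t0 + 2*pi}" using tk by auto
  qed
  then show ?thesis by (rule finite_subset) simp
qed

lemma cmod_identity:
  fixes w :: complex and s :: real
  assumes w: "cmod w = 1"
  shows "cmod (1 - s * w) ^ 2 = (1 - s)^2 + s * cmod (1 - w) ^ 2"
proof -
  have w2: "Re w ^ 2 + Im w ^ 2 = 1" using w by (simp add: cmod_def)
  have "cmod (1 - s * w) ^ 2 = (1 - s * Re w)^2 + (s * Im w)^2" by (simp add: cmod_power2)
  also have "\<dots> = 1 - 2 * s * Re w + s^2 * (Re w ^ 2 + Im w ^ 2)" by (simp add: power2_eq_square algebra_simps)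
  also have "\<dots> = 1 - 2 * s * Re w + s^2" using w2 by simp
  also have "\<dots> = (1 - s)^2 + s * (1 - 2 * Re w + (Re w ^ 2 + Im w ^ 2))" using w2 by (simp add: power2_eq_square algebra_simps)
  also have "1 - 2 * Re w + (Re w ^ 2 + Im w ^ 2) = (1 - Re w)^2 + (Im w)^2" by (simp add: power2_eq_square algebra_simps)
  also have "\<dots> = cmod (1 - w) ^ 2" by (simp add: cmod_power2)
  finally show ?thesis .
qed

lemma J2:
  assumes c: "cmod c = 1"
  shows "((\<lambda>t. ln (cmod (1 - c * exp (\<i> * complex_of_real t)))) has_integral 0) {0..2*pi}"
proof -
  define e where "e t = exp (\<i> * complex_of_real t)" for t
  have ne: "cmod (e t) = 1" for t unfolding e_def by simp
  have c0: "c \<noteq> 0" using c by auto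
  define u where "u t = cmod (1 - c * e t) ^ 2" for t
  define Z where "Z = {t \<in> {0..2*pi}. exp (\<i> * complex_of_real t) = inverse c}"
  have finZ: "finite Z" unfolding Z_def by (rule fin_circle)
  define S where "S = {0<..<2*pi} - Z"
  have SI: "S \<subseteq> {0..2*pi}" unfolding S_def by auto
  have negl: "negligible ({0..2*pi} - S)"
  proof (rule negligible_subset[of "{0, 2*pi} \<union> Z"])
    show "negligible ({0, 2 * pi} \<union> Z)" using finZ by (intro negligible_finite) auto
    show "{0..2 * pi} - S \<subseteq> {0, 2 * pi} \<union> Z" unfolding S_def by auto
  qed
  have spike: "(g has_integral y) {0..2*pi} \<longleftrightarrow> (g has_integral y) S" for g :: "real \<Rightarrow> real" and y
  proof (rule has_integral_spike_set_eq)
    show "negligible {x \<in> {0..2 * pi} - S. g x \<noteq> 0}" by (rule negligible_subset[OF negl]) auto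
    have "{x \<in> S - {0..2 * pi}. g x \<noteq> 0} = {}" using SI by blast
    then show "negligible {x \<in> S - {0..2 * pi}. g x \<noteq> 0}" by (simp only: negligible_empty)
  qed
  have cne: "1 - c * e t \<noteq> 0" if "t \<in> S" for t
  proof
    assume "1 - c * e t = 0"
    then have "e t = inverse c" using c0 by (simp add: field_simps)
    then show False using that unfolding S_def Z_def e_def by auto
  qed
  have upos: "u t > 0" if "t \<in> S" for t unfolding u_def using cne[OF that] by simp
  define s where "s k = 1 - inverse (real (Suc (Suc k)))" for k
  have s_ge: "s k \<ge> 1/2" for k
  proof -
    have "inverse (real (Suc (Suc k))) \<le> inverse 2" by (rule le_imp_inverse_le) auto
    then show ?thesis unfolding s_def by simp
  qed
  have s_lt: "s k < 1" for k unfolding s_def by simp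
  have s_pos: "s k > 0" for k using s_ge[of k] by linarith
  define eps where "eps k = (1 - s k)^2 / s k" for k
  have eps_eq: "eps k = 1 / ((real k + 1) * (real k + 2))" for k
  proof -
    have a: "real k + 2 > 0" "real k + 1 > 0" by auto
    have s1: "1 - s k = 1 / (real k + 2)" unfolding s_def by (simp add: divide_inverse)
    have s2: "s k = (real k + 1) / (real k + 2)" using a unfolding s_def by (simp add: field_simps)
    have "eps k = (1 / (real k + 2))^2 / ((real k + 1) / (real k + 2))" unfolding eps_def s1 s2[symmetric] ..
    also have "\<dots> = 1 / ((real k + 1) * (real k + 2))"
    proof -
      have gen: "\<And>a b::real. a > 0 \<Longrightarrow> b > 0 \<Longrightarrow> (1 / b)^2 / (a / b) = 1 / (a * b)"
        by (simp add: power2_eq_square)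
      show ?thesis by (rule gen) (use a in auto)
    qed
    finally show ?thesis .
  qed
  have eps_pos: "eps k > 0" for k unfolding eps_eq by simp
  have eps_mono: "eps (Suc k) \<le> eps k" for k
    unfolding eps_eq by (rule divide_left_mono) (auto intro!: mult_mono)
  define f where "f k t = ln (eps k + u t)" for k t
  have f_eq: "f k t = 2 * ln (cmod (1 - (complex_of_real (s k) * c) * e t)) - ln (s k)" for k t
  proof -
    have cw: "cmod (c * e t) = 1" using c ne by (simp add: norm_mult)
    have "cmod (1 - complex_of_real (s k) * (c * e t)) ^ 2 = (1 - s k)^2 + s k * u t"
      unfolding u_def by (rule cmod_identity[OF cw])
    then have id: "eps k + u t = cmod (1 - (complex_of_real (s k) * c) * e t) ^ 2 / s k"
      unfolding eps_def using s_pos[of k] by (simp add: field_simps mult.assoc)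
    have "cmod (complex_of_real (s k) * c * e t) < 1"
      using s_lt[of k] s_pos[of k] cw by (simp add: norm_mult mult.assoc)
    then have "(complex_of_real (s k) * c) * e t \<noteq> 1" by auto
    then have pos: "cmod (1 - (complex_of_real (s k) * c) * e t) > 0" by simp
    show ?thesis unfolding f_def id using pos s_pos[of k] by (simp add: ln_div ln_realpow)
  qed
  have fint: "((f k) has_integral (- (2*pi) * ln (s k))) S" for k
  proof -
    have cs: "cmod (complex_of_real (s k) * c) < 1" using s_lt[of k] s_pos[of k] c by (simp add: norm_mult)
    have "((\<lambda>t. 2 * ln (cmod (1 - (complex_of_real (s k) * c) * e t))) has_integral 2 * 0) {0..2*pi}"
      unfolding e_def by (intro has_integral_cmult_real J1[OF cs])
    from has_integral_diff[OF this has_integral_const_real[of "ln (s k)" 0 "2*pi"]]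
    have "((\<lambda>t. 2 * ln (cmod (1 - (complex_of_real (s k) * c) * e t)) - ln (s k)) has_integral
        (- (2*pi) * ln (s k))) {0..2*pi}" by simp
    then have "((f k) has_integral (- (2*pi) * ln (s k))) {0..2*pi}"
      by (simp add: f_eq[abs_def])
    then show ?thesis using spike by blast
  qed
  have "(\<lambda>t. ln (u t)) integrable_on S \<and> (\<lambda>k. integral S (f k)) \<longlonglongrightarrow> integral S (\<lambda>t. ln (u t))"
  proof (rule monotone_convergence_decreasing)
    show "f k integrable_on S" for k using fint by blast
    show "f (Suc k) x \<le> f k x" if "x \<in> S" for k x
      unfolding f_def using eps_mono[of k] eps_pos[of "Suc k"] upos[OF that] by simp
    show "(\<lambda>k. f k x) \<longlonglongrightarrow> ln (u x)" if "x \<in> S" for x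
    proof -
      have sl: "s \<longlonglongrightarrow> 1"
      proof -
        have "(\<lambda>n. 1 + - inverse (real (Suc n))) \<longlonglongrightarrow> 1" by (rule LIMSEQ_inverse_real_of_nat_add_minus)
        then have "(\<lambda>n. 1 + - inverse (real (Suc (Suc n)))) \<longlonglongrightarrow> 1" by (rule LIMSEQ_Suc)
        then show ?thesis unfolding s_def[abs_def] by simp
      qed
      have "eps \<longlonglongrightarrow> (1 - 1)^2 / 1" unfolding eps_def[abs_def] by (intro tendsto_intros sl) auto
      then have "(\<lambda>k. eps k + u x) \<longlonglongrightarrow> 0 + u x" by (intro tendsto_intros) auto
      then show ?thesis unfolding f_def using upos[OF that] by (intro tendsto_ln) auto
    qed
    show "bounded (range (\<lambda>k. integral S (f k)))"
    proof -
      have "\<bar>integral S (f k)\<bar> \<le> 2 * pi * ln 2" for k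
      proof -
        have "integral S (f k) = - (2*pi) * ln (s k)" using fint integral_unique by blast
        moreover have "ln (s k) \<le> 0" using s_lt[of k] s_pos[of k] by simp
        moreover have "ln (s k) \<ge> - ln 2"
        proof -
          have "ln (1/2) \<le> ln (s k)" using s_ge[of k] by simp
          then show ?thesis by (simp add: ln_div)
        qed
        moreover have "pi * (- ln (s k)) \<le> pi * ln 2"
          by (rule mult_left_mono) (use calculation in auto)
        ultimately show ?thesis by (simp add: abs_mult)
      qed
      then show ?thesis unfolding bounded_iff by auto
    qed
  qed
  then have int: "(\<lambda>t. ln (u t)) integrable_on S" and lim: "(\<lambda>k. integral S (f k)) \<longlonglongrightarrow> integral S (\<lambda>t. ln (u t))"
    by auto
  have "(\<lambda>k. integral S (f k)) = (\<lambda>k. - (2*pi) * ln (s k))" using fint integral_unique by blast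
  moreover have "(\<lambda>k. - (2*pi) * ln (s k)) \<longlonglongrightarrow> - (2*pi) * ln 1"
  proof -
    have sl: "s \<longlonglongrightarrow> 1"
    proof -
      have "(\<lambda>n. 1 + - inverse (real (Suc n))) \<longlonglongrightarrow> 1" by (rule LIMSEQ_inverse_real_of_nat_add_minus)
      then have "(\<lambda>n. 1 + - inverse (real (Suc (Suc n)))) \<longlonglongrightarrow> 1" by (rule LIMSEQ_Suc)
      then show ?thesis unfolding s_def[abs_def] by simp
    qed
    show ?thesis by (intro tendsto_intros sl) auto
  qed
  ultimately have "integral S (\<lambda>t. ln (u t)) = 0" using lim LIMSEQ_unique by fastforce
  then have h: "((\<lambda>t. ln (u t)) has_integral 0) S" using int has_integral_integral by metis
  have "((\<lambda>t. (1/2) * ln (u t)) has_integral (1/2) * 0) S" by (rule has_integral_cmult_real) (use h in auto)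
  moreover have "(1/2) * ln (u t) = ln (cmod (1 - c * e t))" if "t \<in> S" for t
    unfolding u_def using cne[OF that] by (simp add: ln_realpow)
  ultimately have "((\<lambda>t. ln (cmod (1 - c * e t))) has_integral 0) S"
    using has_integral_eq by (metis (no_types, lifting) mult_zero_right)
  then show ?thesis using spike unfolding e_def by blast
qed


lemma Jc: "cmod c \<le> 1 \<Longrightarrow> ((\<lambda>t. ln (cmod (1 - c * exp (\<i> * complex_of_real t)))) has_integral 0) {0..2*pi}"
  using J1 J2 by (cases "cmod c < 1") auto

lemma jensen_lin:
  assumes r: "r > 0" and a: "a \<noteq> 0"
  shows "((\<lambda>t. ln (cmod (complex_of_real r * exp (\<i> * complex_of_real t) - a))) has_integral
           (2 * pi * max (ln r) (ln (cmod a)))) {0..2*pi}"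
proof (cases "cmod a \<le> r")
  case True
  define c where "c = cnj a / complex_of_real r"
  have c1: "cmod c \<le> 1" using True r unfolding c_def by (simp add: norm_divide)
  have eq: "ln (cmod (complex_of_real r * exp (\<i> * complex_of_real t) - a)) =
      ln r + ln (cmod (1 - c * exp (\<i> * complex_of_real t)))"
    if nz: "1 - c * exp (\<i> * complex_of_real t) \<noteq> 0" for t
  proof -
    let ?e = "exp (\<i> * complex_of_real t)"
    have ce: "cnj ?e = inverse ?e" by (simp add: exp_cnj exp_minus[symmetric])
    have e0: "?e \<noteq> 0" by simp
    have "cmod (1 - c * ?e) = cmod (cnj (1 - c * ?e))" by (rule complex_mod_cnj[symmetric])
    also have "cnj (1 - c * ?e) = 1 - (a / complex_of_real r) * inverse ?e"
      unfolding c_def by (simp add: ce)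
    also have "\<dots> = (complex_of_real r * ?e - a) / (complex_of_real r * ?e)"
    proof -
      have re: "complex_of_real r * ?e \<noteq> 0" using e0 r by simp
      have "(complex_of_real r * ?e - a) / (complex_of_real r * ?e) = 1 - a / (complex_of_real r * ?e)"
        using re by (simp add: diff_divide_distrib)
      also have "a / (complex_of_real r * ?e) = (a / complex_of_real r) * inverse ?e"
        by (simp add: divide_inverse mult.assoc)
      finally show ?thesis by simp
    qed
    also have "cmod \<dots> = cmod (complex_of_real r * ?e - a) / r"
      using r by (simp add: norm_divide norm_mult)
    finally have "cmod (complex_of_real r * ?e - a) = r * cmod (1 - c * ?e)" using r by simp
    moreover have "cmod (1 - c * ?e) > 0" using nz by simp
    ultimately show ?thesis using r by (simp add: ln_mult)
  qed
  have k: "((\<lambda>t. ln r) has_integral 2 * pi * ln r) {0..2*pi}"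
    using has_integral_const_real[of "ln r" 0 "2*pi"] by simp
  have "((\<lambda>t. ln r + ln (cmod (1 - c * exp (\<i> * complex_of_real t)))) has_integral
       (2 * pi * ln r + 0)) {0..2*pi}"
    by (intro has_integral_add k Jc c1)
  then have "((\<lambda>t. ln r + ln (cmod (1 - c * exp (\<i> * complex_of_real t)))) has_integral
       (2 * pi * ln r)) {0..2*pi}" by simp
  moreover have "max (ln r) (ln (cmod a)) = ln r" using True a r by simp
  ultimately have G: "((\<lambda>t. ln r + ln (cmod (1 - c * exp (\<i> * complex_of_real t)))) has_integral
       (2 * pi * max (ln r) (ln (cmod a)))) {0..2*pi}" by simp
  show ?thesis
  proof (rule has_integral_spike_finite[OF fin_circle[of "inverse c"] _ G])
    fix t assume t: "t \<in> {0..2*pi} - {t \<in> {0..2*pi}. exp (\<i> * complex_of_real t) = inverse c}"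
    have "1 - c * exp (\<i> * complex_of_real t) \<noteq> 0"
    proof
      assume "1 - c * exp (\<i> * complex_of_real t) = 0"
      then have "c * exp (\<i> * complex_of_real t) = 1" by simp
      then have "exp (\<i> * complex_of_real t) = inverse c" by (metis inverse_unique mult.commute)
      with t show False by blast
    qed
    then show "ln (cmod (complex_of_real r * exp (\<i> * complex_of_real t) - a)) =
       ln r + ln (cmod (1 - c * exp (\<i> * complex_of_real t)))" by (rule eq)
  qed
next
  case False
  define c where "c = complex_of_real r / a"
  have c1: "cmod c \<le> 1" using False r a unfolding c_def by (simp add: norm_divide)
  have eq: "ln (cmod (complex_of_real r * exp (\<i> * complex_of_real t) - a)) =
      ln (cmod a) + ln (cmod (1 - c * exp (\<i> * complex_of_real t)))"
    if nz: "1 - c * exp (\<i> * complex_of_real t) \<noteq> 0" for t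
  proof -
    let ?e = "exp (\<i> * complex_of_real t)"
    have "complex_of_real r * ?e - a = - a * (1 - c * ?e)" unfolding c_def using a
      by (simp add: field_simps)
    then have "cmod (complex_of_real r * ?e - a) = cmod a * cmod (1 - c * ?e)"
      by (simp add: norm_mult)
    moreover have "cmod (1 - c * ?e) > 0" using nz by simp
    ultimately show ?thesis using a by (simp add: ln_mult)
  qed
  have k: "((\<lambda>t. ln (cmod a)) has_integral 2 * pi * ln (cmod a)) {0..2*pi}"
    using has_integral_const_real[of "ln (cmod a)" 0 "2*pi"] by simp
  have "((\<lambda>t. ln (cmod a) + ln (cmod (1 - c * exp (\<i> * complex_of_real t)))) has_integral
       (2 * pi * ln (cmod a) + 0)) {0..2*pi}"
    by (intro has_integral_add k Jc c1)
  then have "((\<lambda>t. ln (cmod a) + ln (cmod (1 - c * exp (\<i> * complex_of_real t)))) has_integral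
       (2 * pi * ln (cmod a))) {0..2*pi}" by simp
  moreover have "max (ln r) (ln (cmod a)) = ln (cmod a)" using False a r by simp
  ultimately have G: "((\<lambda>t. ln (cmod a) + ln (cmod (1 - c * exp (\<i> * complex_of_real t)))) has_integral
       (2 * pi * max (ln r) (ln (cmod a)))) {0..2*pi}" by simp
  show ?thesis
  proof (rule has_integral_spike_finite[OF fin_circle[of "inverse c"] _ G])
    fix t assume t: "t \<in> {0..2*pi} - {t \<in> {0..2*pi}. exp (\<i> * complex_of_real t) = inverse c}"
    have "1 - c * exp (\<i> * complex_of_real t) \<noteq> 0"
    proof
      assume "1 - c * exp (\<i> * complex_of_real t) = 0"
      then have "c * exp (\<i> * complex_of_real t) = 1" by simp
      then have "exp (\<i> * complex_of_real t) = inverse c" by (metis inverse_unique mult.commute)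
      with t show False by blast
    qed
    then show "ln (cmod (complex_of_real r * exp (\<i> * complex_of_real t) - a)) =
       ln (cmod a) + ln (cmod (1 - c * exp (\<i> * complex_of_real t)))" by (rule eq)
  qed
qed


lemma det_uminus_cmod:
  fixes X :: "complex mat" assumes X: "X \<in> carrier_mat k k"
  shows "cmod (det (- X)) = cmod (det X)"
proof -
  have "- X = (-1) \<cdot>\<^sub>m X" using X by (intro eq_matI) auto
  then have "det (- X) = (-1)^k * det X" using X by simp
  then show ?thesis by (simp add: norm_mult norm_power)
qed

lemma poly_linprod: fixes zs :: "complex list" shows "poly (\<Prod>z\<leftarrow>zs. [:- z, 1:]) w = (\<Prod>z\<leftarrow>zs. w - z)"
proof (induct zs)
  case Nil then show ?case by simp
next
  case (Cons a zs)
  have "poly [:- a, 1:] w = w - a" by (simp add: algebra_simps)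
  then show ?case using Cons by (simp add: left_diff_distrib)
qed

lemma zero_minus_uminus: "(Y :: complex mat) \<in> carrier_mat m m \<Longrightarrow> 0\<^sub>m m m - (- Y) = Y"
  by (intro eq_matI) auto

context
  fixes m n :: nat and A B C :: "nat \<Rightarrow> complex mat" and E :: complex
  assumes Ac: "\<And>k. k \<in> {1..n} \<Longrightarrow> A k \<in> carrier_mat m m"
    and Bc: "\<And>k. k \<in> {1..n} \<Longrightarrow> B k \<in> carrier_mat m m"
    and Cc: "\<And>k. k \<in> {1..n} \<Longrightarrow> C k \<in> carrier_mat m m"
    and Bi: "\<And>k. k \<in> {1..n} \<Longrightarrow> invertible_mat (B k)"
    and Ci: "\<And>k. k \<in> {1..n} \<Longrightarrow> invertible_mat (C k)"
begin

lemma det_inv_nz: "k \<in> {1..n} \<Longrightarrow> det (B k) \<noteq> 0 \<and> det (C k) \<noteq> 0"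
proof -
  assume k: "k \<in> {1..n}"
  have "det (B k) * det (minv (B k)) = 1"
    using minv_props[OF Bc[OF k] Bi[OF k]] Bc[OF k] det_mult[of "B k" m "minv (B k)"] by auto
  moreover have "det (C k) * det (minv (C k)) = 1"
    using minv_props[OF Cc[OF k] Ci[OF k]] Cc[OF k] det_mult[of "C k" m "minv (C k)"] by auto
  ultimately show ?thesis by auto
qed

lemma tstep_carrier: "k \<in> {1..n} \<Longrightarrow> tstep m A B C k E \<in> carrier_mat (2*m) (2*m)"
proof -
  assume k: "k \<in> {1..n}"
  note mv = minv_props[OF Bc[OF k] Bi[OF k]]
  have X: "minv (B k) * (E \<cdot>\<^sub>m 1\<^sub>m m - A k) \<in> carrier_mat m m" using mv Ac[OF k] by auto
  have Y: "- (minv (B k) * C k) \<in> carrier_mat m m" using mv Cc[OF k] by auto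
  show ?thesis unfolding tstep_def mult_2 by (rule four_block_carrier_mat[OF X]) simp
qed

lemma tprod_carrier: "k \<le> n \<Longrightarrow> tprod m A B C k E \<in> carrier_mat (2*m) (2*m)"
proof (induct k)
  case 0 then show ?case by simp
next
  case (Suc k)
  then show ?case using tstep_carrier[of "Suc k"] by (auto intro: mult_carrier_mat)
qed

lemma det_tstep:
  assumes k: "k \<in> {1..n}"
  shows "cmod (det (tstep m A B C k E)) = cmod (det (C k)) / cmod (det (B k))"
proof -
  note mv = minv_props[OF Bc[OF k] Bi[OF k]]
  let ?X = "minv (B k) * (E \<cdot>\<^sub>m 1\<^sub>m m - A k)"
  let ?Y = "minv (B k) * C k"
  have X: "?X \<in> carrier_mat m m" using mv Ac[OF k] by auto
  have Y: "?Y \<in> carrier_mat m m" using mv Cc[OF k] by auto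
  have "det (tstep m A B C k E) = det (?X * 0\<^sub>m m m - (- ?Y) * 1\<^sub>m m)"
    unfolding tstep_def by (rule det_four_block_mat) (use X Y in auto)
  also have "?X * 0\<^sub>m m m - (- ?Y) * 1\<^sub>m m = ?Y"
  proof -
    have "?X * 0\<^sub>m m m = 0\<^sub>m m m" by (rule right_mult_zero_mat[OF X])
    moreover have "(- ?Y) * 1\<^sub>m m = - ?Y" by (rule right_mult_one_mat) (use Y in simp)
    moreover have "0\<^sub>m m m - (- ?Y) = ?Y" by (rule zero_minus_uminus[OF Y])
    ultimately show ?thesis by simp
  qed
  also have "det ?Y = det (minv (B k)) * det (C k)"
    using mv Cc[OF k] by (intro det_mult) auto
  finally have d: "det (tstep m A B C k E) = det (minv (B k)) * det (C k)" .
  have "det (B k) * det (minv (B k)) = 1"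
    using mv Bc[OF k] det_mult[of "B k" m "minv (B k)"] by auto
  then have "det (minv (B k)) = inverse (det (B k))" by (simp add: inverse_unique)
  then show ?thesis unfolding d by (simp add: norm_mult norm_inverse divide_inverse mult.commute)
qed

lemma det_tprod:
  "k \<le> n \<Longrightarrow> cmod (det (tprod m A B C k E)) = (\<Prod>i\<in>{1..k}. cmod (det (C i)) / cmod (det (B i)))"
proof (induct k)
  case 0 then show ?case by simp
next
  case (Suc k)
  have "det (tprod m A B C (Suc k) E) = det (tstep m A B C (Suc k) E) * det (tprod m A B C k E)"
    using det_mult[OF tstep_carrier[of "Suc k"] tprod_carrier[of k]] Suc.prems by simp
  then have "cmod (det (tprod m A B C (Suc k) E)) =
      cmod (det (tstep m A B C (Suc k) E)) * cmod (det (tprod m A B C k E))" by (simp add: norm_mult)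
  also have "\<dots> = (cmod (det (C (Suc k))) / cmod (det (B (Suc k)))) *
      (\<Prod>i\<in>{1..k}. cmod (det (C i)) / cmod (det (B i)))"
    using Suc det_tstep[of "Suc k"] by simp
  also have "\<dots> = (\<Prod>i\<in>{1..Suc k}. cmod (det (C i)) / cmod (det (B i)))"
    by (simp add: atLeastAtMostSuc_conv mult.commute)
  finally show ?case .
qed

end


lemma norm_prod_list_map: "cmod (\<Prod>z\<leftarrow>zs. f z) = (\<Prod>z\<leftarrow>zs. cmod (f z))"
  by (induct zs) (auto simp: norm_mult)

lemma prod_list_pos: fixes f :: "'a \<Rightarrow> real"
  shows "(\<And>z. z \<in> set zs \<Longrightarrow> f z > 0) \<Longrightarrow> (\<Prod>z\<leftarrow>zs. f z) > 0"
  by (induct zs) auto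

lemma ln_prod_list_map: fixes f :: "'a \<Rightarrow> real"
  shows "(\<And>z. z \<in> set zs \<Longrightarrow> f z > 0) \<Longrightarrow> ln (\<Prod>z\<leftarrow>zs. f z) = (\<Sum>z\<leftarrow>zs. ln (f z))"
proof (induct zs)
  case Nil then show ?case by simp
next
  case (Cons a zs)
  have P: "(\<Prod>z\<leftarrow>zs. f z) > 0" using Cons.prems by (intro prod_list_pos) auto
  have fa: "f a > 0" using Cons.prems by auto
  have "ln (\<Prod>z\<leftarrow>a#zs. f z) = ln (f a * (\<Prod>z\<leftarrow>zs. f z))" by simp
  also have "\<dots> = ln (f a) + ln (\<Prod>z\<leftarrow>zs. f z)" by (rule ln_mult_pos[OF fa P])
  also have "ln (\<Prod>z\<leftarrow>zs. f z) = (\<Sum>z\<leftarrow>zs. ln (f z))" using Cons by auto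
  finally show ?case by simp
qed

lemma has_integral_sum_list:
  "(\<And>z. z \<in> set zs \<Longrightarrow> ((f z) has_integral I z) S) \<Longrightarrow>
   ((\<lambda>x. \<Sum>z\<leftarrow>zs. f z x) has_integral (\<Sum>z\<leftarrow>zs. I z)) S"
proof (induct zs)
  case Nil then show ?case by simp
next
  case (Cons a zs)
  then show ?case by (simp add: has_integral_add)
qed

lemma prod_shift: "(\<Prod>a<n. f (Suc a)) = (\<Prod>k\<in>{1..n}. (f k :: real))"
  by (induct n) (auto simp: atLeastAtMostSuc_conv mult.commute)

lemma sum_shift: "(\<Sum>a<n. f (Suc a)) = (\<Sum>k\<in>{1..n}. (f k :: real))"
  by (induct n) (auto simp: atLeastAtMostSuc_conv add.commute)

lemma final_arith:
  fixes m n S c \<xi> :: real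
  assumes "m > 0" "n > 0"
  shows "(1 / m) * S - \<xi> = (1 / (m * n)) * (c + n * S - m * (n * \<xi>)) - (1 / (m * n)) * c"
  using assms by (simp add: field_simps)

theorem proposition7:
  fixes m n :: nat and A B C :: "nat \<Rightarrow> complex mat" and E :: complex
    and zs :: "complex list" and \<xi> :: real
  assumes "m \<ge> 1" and "n \<ge> 3"
    and "\<And>k. k \<in> {1..n} \<Longrightarrow> A k \<in> carrier_mat m m"
    and "\<And>k. k \<in> {1..n} \<Longrightarrow> B k \<in> carrier_mat m m"
    and "\<And>k. k \<in> {1..n} \<Longrightarrow> C k \<in> carrier_mat m m"
    and "\<And>k. k \<in> {1..n} \<Longrightarrow> invertible_mat (B k)"
    and "\<And>k. k \<in> {1..n} \<Longrightarrow> invertible_mat (C k)"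
    and "char_poly (transfer m n A B C E) = (\<Prod>z\<leftarrow>zs. [:- z, 1:])"
  shows "(1 / real m) * (\<Sum>z\<leftarrow>zs. if ln (cmod z) / real n < \<xi>
                                   then \<xi> - ln (cmod z) / real n else 0) - \<xi>
       = (1 / (real m * real n)) *
           integral {0..2 * pi} (\<lambda>\<phi>. ln (cmod (Determinant.det
              (Hmat m n A B C (exp (complex_of_real (real n * \<xi>) + \<i> * complex_of_real \<phi>))
               - E \<cdot>\<^sub>m 1\<^sub>m (n * m)))) / (2 * pi))
         - (1 / (real m * real n)) * (\<Sum>j = 1..n. ln (cmod (Determinant.det (C j))))"
proof -
  note m1 = assms(1) and n3 = assms(2) and Ac = assms(3) and Bc = assms(4) and Cc = assms(5)
    and Bi = assms(6) and Ci = assms(7) and cp = assms(8)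
  define T where "T = transfer m n A B C E"
  have T_eq: "T = tprod m A B C n E" unfolding T_def transfer_def ..
  have cT: "T \<in> carrier_mat (2*m) (2*m)" unfolding T_eq
    using tprod_carrier[where m=m and n=n and A=A and B=B and C=C and E=E, OF Ac Bc Cc Bi Ci] by simp
  have L1: "cmod (det (T - w \<cdot>\<^sub>m 1\<^sub>m (2*m))) = (\<Prod>z\<leftarrow>zs. cmod (w - z))" for w
  proof -
    have "poly (char_poly T) w = det (- char_matrix T w)" by (rule char_poly_matrix[OF cT])
    moreover have "- char_matrix T w = - (T - w \<cdot>\<^sub>m 1\<^sub>m (2*m))"
      using cT unfolding char_matrix_def by (intro eq_matI) auto
    moreover have "poly (char_poly T) w = (\<Prod>z\<leftarrow>zs. w - z)" using cp unfolding T_def by (simp add: poly_linprod)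
    ultimately have "det (- (T - w \<cdot>\<^sub>m 1\<^sub>m (2*m))) = (\<Prod>z\<leftarrow>zs. w - z)" by simp
    moreover have "cmod (det (- (T - w \<cdot>\<^sub>m 1\<^sub>m (2*m)))) = cmod (det (T - w \<cdot>\<^sub>m 1\<^sub>m (2*m)))"
      by (rule det_uminus_cmod) (use cT in auto)
    ultimately show ?thesis by (simp add: norm_prod_list_map)
  qed
  have detT: "cmod (det T) = (\<Prod>k\<in>{1..n}. cmod (det (C k)) / cmod (det (B k)))"
    unfolding T_eq using det_tprod[where m=m and n=n and A=A and B=B and C=C and E=E, OF Ac Bc Cc Bi Ci, of n] by simp
  have dnz: "k \<in> {1..n} \<Longrightarrow> det (B k) \<noteq> 0 \<and> det (C k) \<noteq> 0" for k
    by (rule det_inv_nz[where m=m and n=n and A=A and B=B and C=C, OF Ac Bc Cc Bi Ci])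
  have detT_pos: "cmod (det T) > 0" unfolding detT using dnz by (intro prod_pos) auto
  have L0: "cmod (det T) = (\<Prod>z\<leftarrow>zs. cmod z)"
  proof -
    have "T - 0 \<cdot>\<^sub>m 1\<^sub>m (2*m) = T" using cT by (intro eq_matI) auto
    then show ?thesis using L1[of 0] by simp
  qed
  have zs_nz: "z \<noteq> 0" if "z \<in> set zs" for z
  proof
    assume "z = 0"
    then have "(0::real) \<in> set (map cmod zs)" using that by force
    then have "(\<Prod>z\<leftarrow>zs. cmod z) = 0" by (subst prod_list_zero_iff) assumption
    then show False using L0 detT_pos by linarith
  qed
  have sum_ln_zs: "(\<Sum>z\<leftarrow>zs. ln (cmod z)) =
      (\<Sum>k\<in>{1..n}. ln (cmod (det (C k)))) - (\<Sum>k\<in>{1..n}. ln (cmod (det (B k))))"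
  proof -
    have "(\<Sum>z\<leftarrow>zs. ln (cmod z)) = ln (\<Prod>z\<leftarrow>zs. cmod z)"
      using zs_nz by (intro ln_prod_list_map[symmetric]) auto
    also have "\<dots> = ln (\<Prod>k\<in>{1..n}. cmod (det (C k)) / cmod (det (B k)))" using L0 detT by simp
    also have "\<dots> = (\<Sum>k\<in>{1..n}. ln (cmod (det (C k)) / cmod (det (B k))))"
      using dnz by (intro ln_prod) auto
    also have "\<dots> = (\<Sum>k\<in>{1..n}. ln (cmod (det (C k))) - ln (cmod (det (B k))))"
      using dnz by (intro sum.cong) (auto simp: ln_div)
    finally show ?thesis by (simp add: sum_subtractf)
  qed
  define r where "r = exp (real n * \<xi>)"
  have r0: "r > 0" unfolding r_def by simp
  have lnr: "ln r = real n * \<xi>" unfolding r_def by simp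
  define P where "P = (\<Prod>a<n. cmod (det (B (Suc a))))"
  have P0: "P > 0" unfolding P_def using dnz by (intro prod_pos) auto
  have lnP: "ln P = (\<Sum>k\<in>{1..n}. ln (cmod (det (B k))))"
  proof -
    have "ln P = (\<Sum>a<n. ln (cmod (det (B (Suc a)))))" unfolding P_def
      using dnz by (intro ln_prod) auto
    then show ?thesis by (simp add: sum_shift[of "\<lambda>k. ln (cmod (det (B k)))"])
  qed
  define W where "W \<phi> = exp (complex_of_real (real n * \<xi>) + \<i> * complex_of_real \<phi>)" for \<phi>
  have W_eq: "W \<phi> = complex_of_real r * exp (\<i> * complex_of_real \<phi>)" for \<phi>
    unfolding W_def r_def exp_add exp_of_real ..
  have cW: "cmod (W \<phi>) = r" for \<phi> unfolding W_eq using r0 by (simp add: norm_mult)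
  define f where "f \<phi> = ln (cmod (det (Hmat m n A B C (W \<phi>) - E \<cdot>\<^sub>m 1\<^sub>m (n*m))))" for \<phi>
  define g where "g \<phi> = (\<Sum>z\<leftarrow>zs. ln (cmod (complex_of_real r * exp (\<i> * complex_of_real \<phi>) - z)))
       + (ln P - real m * ln r)" for \<phi>
  define I0 where "I0 = (\<Sum>z\<leftarrow>zs. 2 * pi * max (ln r) (ln (cmod z))) + 2 * pi * (ln P - real m * ln r)"
  have g_int: "(g has_integral I0) {0..2*pi}"
  proof -
    have "((\<lambda>\<phi>. \<Sum>z\<leftarrow>zs. ln (cmod (complex_of_real r * exp (\<i> * complex_of_real \<phi>) - z))) has_integral
        (\<Sum>z\<leftarrow>zs. 2 * pi * max (ln r) (ln (cmod z)))) {0..2*pi}"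
      by (rule has_integral_sum_list) (use jensen_lin r0 zs_nz in blast)
    moreover have "((\<lambda>\<phi>. ln P - real m * ln r) has_integral 2 * pi * (ln P - real m * ln r)) {0..2*pi}"
      using has_integral_const_real[of "ln P - real m * ln r" 0 "2*pi"] by simp
    ultimately show ?thesis unfolding g_def[abs_def] I0_def by (rule has_integral_add)
  qed
  define Zs where "Zs = (\<Union>z\<in>set zs. {\<phi> \<in> {0..2*pi}. exp (\<i> * complex_of_real \<phi>) = z / complex_of_real r})"
  have finZs: "finite Zs" unfolding Zs_def using fin_circle by auto
  have fg: "f \<phi> = g \<phi>" if "\<phi> \<in> {0..2*pi} - Zs" for \<phi>
  proof -
    have Wnz: "W \<phi> \<noteq> z" if "z \<in> set zs" for z
    proof
      assume "W \<phi> = z"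
      then have "exp (\<i> * complex_of_real \<phi>) = z / complex_of_real r" using r0 unfolding W_eq
        by (simp add: field_simps)
      then show False using \<open>\<phi> \<in> {0..2*pi} - Zs\<close> that unfolding Zs_def by blast
    qed
    have W0: "W \<phi> \<noteq> 0" unfolding W_def by simp
    have rel: "cmod (W \<phi>) ^ m * cmod (det (Hmat m n A B C (W \<phi>) - E \<cdot>\<^sub>m 1\<^sub>m (n*m))) =
        cmod (det (tprod m A B C n E - W \<phi> \<cdot>\<^sub>m 1\<^sub>m (2*m))) * P"
      unfolding P_def
      by (rule det_relation[where m=m and n=n and A=A and B=B and C=C and E=E and z="W \<phi>", OF Ac Bc Cc Bi n3 m1 W0])
    then have "r ^ m * cmod (det (Hmat m n A B C (W \<phi>) - E \<cdot>\<^sub>m 1\<^sub>m (n*m))) =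
        (\<Prod>z\<leftarrow>zs. cmod (W \<phi> - z)) * P" using L1[of "W \<phi>"] cW unfolding T_eq by simp
    then have D: "cmod (det (Hmat m n A B C (W \<phi>) - E \<cdot>\<^sub>m 1\<^sub>m (n*m))) =
        (\<Prod>z\<leftarrow>zs. cmod (W \<phi> - z)) * P / r ^ m" using r0 by (simp add: field_simps)
    have pos: "(\<Prod>z\<leftarrow>zs. cmod (W \<phi> - z)) > 0"
    proof -
      show ?thesis using Wnz by (intro prod_list_pos) auto
    qed
    have "f \<phi> = ln (\<Prod>z\<leftarrow>zs. cmod (W \<phi> - z)) + ln P - real m * ln r"
    proof -
      have "ln ((\<Prod>z\<leftarrow>zs. cmod (W \<phi> - z)) * P / r ^ m) = ln ((\<Prod>z\<leftarrow>zs. cmod (W \<phi> - z)) * P) - ln (r ^ m)"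
        by (rule ln_divide_pos) (use pos P0 r0 in auto)
      moreover have "ln ((\<Prod>z\<leftarrow>zs. cmod (W \<phi> - z)) * P) = ln (\<Prod>z\<leftarrow>zs. cmod (W \<phi> - z)) + ln P"
        by (rule ln_mult_pos[OF pos P0])
      ultimately show ?thesis unfolding f_def D by (simp add: ln_realpow)
    qed
    also have "ln (\<Prod>z\<leftarrow>zs. cmod (W \<phi> - z)) = (\<Sum>z\<leftarrow>zs. ln (cmod (W \<phi> - z)))"
      using Wnz by (intro ln_prod_list_map) auto
    finally show ?thesis unfolding g_def W_eq by simp
  qed
  have f_int: "(f has_integral I0) {0..2*pi}"
    by (rule has_integral_spike_finite[OF finZs _ g_int]) (use fg in auto)
  then have "((\<lambda>\<phi>. f \<phi> / (2 * pi)) has_integral I0 / (2 * pi)) {0..2*pi}"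
    by (rule has_integral_divide)
  then have intval: "integral {0..2 * pi} (\<lambda>\<phi>. f \<phi> / (2 * pi)) = I0 / (2 * pi)"
    by (rule integral_unique)
  have I0': "I0 / (2 * pi) = (\<Sum>z\<leftarrow>zs. max (ln r) (ln (cmod z))) + (ln P - real m * ln r)"
    unfolding I0_def by (simp add: sum_list_const_mult field_simps)
  have maxeq: "max (real n * \<xi>) (ln (cmod z)) = ln (cmod z) + real n *
      (if ln (cmod z) / real n < \<xi> then \<xi> - ln (cmod z) / real n else 0)" for z
  proof -
    have np: "real n > 0" using n3 by simp
    show ?thesis
    proof (cases "ln (cmod z) / real n < \<xi>")
      case True
      then have "ln (cmod z) < real n * \<xi>" using np by (simp add: divide_less_eq mult.commute)
      then show ?thesis using True np by (simp add: field_simps)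
    next
      case False
      then have "\<xi> \<le> ln (cmod z) / real n" by simp
      then have "\<xi> * real n \<le> ln (cmod z)" using np by (simp add: le_divide_eq)
      then have "ln (cmod z) \<ge> real n * \<xi>" by (simp add: mult.commute)
      then show ?thesis using False by simp
    qed
  qed
  define S where "S = (\<Sum>z\<leftarrow>zs. if ln (cmod z) / real n < \<xi> then \<xi> - ln (cmod z) / real n else 0)"
  have sum_max: "(\<Sum>z\<leftarrow>zs. max (ln r) (ln (cmod z))) = (\<Sum>z\<leftarrow>zs. ln (cmod z)) + real n * S"
    unfolding lnr maxeq S_def by (simp add: sum_list_addf sum_list_const_mult)
  have mn: "real m > 0" "real n > 0" using m1 n3 by auto
  have "integral {0..2 * pi} (\<lambda>\<phi>. f \<phi> / (2 * pi)) =
     (\<Sum>k\<in>{1..n}. ln (cmod (det (C k)))) + real n * S - real m * (real n * \<xi>)"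
  proof -
    have "integral {0..2 * pi} (\<lambda>\<phi>. f \<phi> / (2 * pi)) =
       (\<Sum>z\<leftarrow>zs. ln (cmod z)) + real n * S + (ln P - real m * ln r)"
      unfolding intval I0' sum_max ..
    then show ?thesis unfolding sum_ln_zs lnP lnr by simp
  qed
  then have X: "integral {0..2 * pi} (\<lambda>\<phi>. ln (cmod (Determinant.det
              (Hmat m n A B C (exp (complex_of_real (real n * \<xi>) + \<i> * complex_of_real \<phi>))
               - E \<cdot>\<^sub>m 1\<^sub>m (n * m)))) / (2 * pi)) =
     (\<Sum>k\<in>{1..n}. ln (cmod (det (C k)))) + real n * S - real m * (real n * \<xi>)"
    unfolding f_def W_def .
  show ?thesis unfolding X S_def[symmetric] by (rule final_arith[OF mn])
qed


end
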